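(* For every $c\in(0,1/2)$ and constants $0<c_1\le c_2$ there exist $C>0$ and $n_0$ such that the following holds. Let $m=\lceil c^{-1}+1\rceil$, let $n\ge n_0$ with $m\mid(n-1)$, $D=(n-1)/m$, let $p$ be a prime with $c_1n^c\le p\le c_2n^c$, and $\theta=\pi/p$. Then the state $$|\psi\rangle=\Big(\big(U_{m,\theta}^\dagger\big)^{\otimes D}\otimes e^{-i\pi X/4}\Big)H^{\otimes n}|\mathrm{GHZ}_n\rangle$$ (where $U_{m,\theta}$ is unitary), measured in the computational basis, yields a distribution $P_\psi$ on $\{0,1\}^{n-1}\times\{0,1\}$ with $$\Delta\big(P_\psi,(X,\mathrm{majmod}_p(X)\oplus\mathrm{parity}(X))\big)\le\tfrac12-\tfrac1\pi+\tfrac Cp,$$ $X$ uniform on $\{0,1\}^{n-1}$.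
   Context: $|\mathrm{GHZ}_n\rangle=(|0^n\rangle+|1^n\rangle)/\sqrt2$; $H$ Hadamard; $X$ Pauli-$X$; the $D$ copies of $U_{m,\theta}^\dagger$ act on consecutive blocks of $m$ qubits among the first $n-1$. $M_{m,\theta}|x_1\cdots x_m\rangle=\bigotimes_{j=1}^m e^{-i\theta x_{j-1}X}|x_j\rangle$ (indices mod $m$, $x_0=x_m$). For $x\in\{0,1\}^m$ let $\bar x$ be its complement and $\gamma_x=\langle\bar x|M_{m,\theta}^\dagger M_{m,\theta}|x\rangle$; $U_{m,\theta}|x\rangle=M_{m,\theta}|x\rangle$ if $x_1=0$ and $U_{m,\theta}|x\rangle=(M_{m,\theta}|x\rangle-\gamma_xM_{m,\theta}|\bar x\rangle)/\sqrt{1-|\gamma_x|^2}$ if $x_1=1$. $\mathrm{parity}(x)=|x|\bmod2$; $\mathrm{majmod}_p(x)=0$ if $(|x|\bmod p)<p/2$, else $1$. $\Delta$ is total variation distance. *)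

theory Defs
  imports Complex_Main "HOL-Computational_Algebra.Primes"
begin

text \<open>Bitstrings of length k are lists of booleans (True = 1, False = 0); qubit j of a
register corresponds to list position j (0-indexed).\<close>

definition bitstrings :: "nat \<Rightarrow> bool list set" where
  "bitstrings k = {xs. length xs = k}"

definition weight :: "bool list \<Rightarrow> nat" where
  "weight xs = length (filter id xs)"

definition parity :: "bool list \<Rightarrow> bool" where
  "parity xs = odd (weight xs)"

definition majmod :: "nat \<Rightarrow> bool list \<Rightarrow> bool" where
  "majmod p xs = (\<not> (real (weight xs mod p) < real p / 2))"

definition compl_bits :: "bool list \<Rightarrow> bool list" where
  "compl_bits xs = map Not xs"

text \<open>Operators are given by their matrix entries: A y x = <y|A|x>. States are amplitude
functions on bitstrings.\<close>

type_synonym qop = "bool list \<Rightarrow> bool list \<Rightarrow> complex"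
type_synonym qstate = "bool list \<Rightarrow> complex"

definition apply_op :: "nat \<Rightarrow> qop \<Rightarrow> qstate \<Rightarrow> qstate" where
  "apply_op k A v = (\<lambda>y. \<Sum>x\<in>bitstrings k. A y x * v x)"

definition adjoint :: "qop \<Rightarrow> qop" where
  "adjoint A = (\<lambda>y x. cnj (A x y))"

text \<open>Single-qubit matrix of exp(-i t X) = cos t I - i sin t X.\<close>
definition expX :: "real \<Rightarrow> bool \<Rightarrow> bool \<Rightarrow> complex" where
  "expX t b a = (if b = a then complex_of_real (cos t) else - \<i> * complex_of_real (sin t))"

text \<open>M_{m,theta}|x_1..x_m> = tensor_j exp(-i theta x_{j-1} X)|x_j>, x_0 = x_m.
 With 0-indexed positions, the control of position j is position (j+m-1) mod m.\<close>
definition M_op :: "nat \<Rightarrow> real \<Rightarrow> qop" where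
  "M_op m \<theta> y x = (\<Prod>j<m. if x ! ((j + m - 1) mod m) then expX \<theta> (y ! j) (x ! j)
                            else (if y ! j = x ! j then 1 else 0))"

definition gamma :: "nat \<Rightarrow> real \<Rightarrow> bool list \<Rightarrow> complex" where
  "gamma m \<theta> x = (\<Sum>z\<in>bitstrings m. cnj (M_op m \<theta> z (compl_bits x)) * M_op m \<theta> z x)"

definition U_op :: "nat \<Rightarrow> real \<Rightarrow> qop" where
  "U_op m \<theta> y x =
     (if \<not> x ! 0 then M_op m \<theta> y x
      else (M_op m \<theta> y x - gamma m \<theta> x * M_op m \<theta> y (compl_bits x))
           / complex_of_real (sqrt (1 - (cmod (gamma m \<theta> x))\<^sup>2)))"

definition block :: "nat \<Rightarrow> nat \<Rightarrow> bool list \<Rightarrow> bool list" where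
  "block m k xs = take m (drop (k * m) xs)"

text \<open>(U^dagger)^{tensor D} tensor exp(-i pi X/4) on m*D+1 qubits; block k = qubits k*m..k*m+m-1,
 last qubit = position m*D.\<close>
definition circuit_op :: "nat \<Rightarrow> real \<Rightarrow> nat \<Rightarrow> qop" where
  "circuit_op m \<theta> D y x =
     (\<Prod>k<D. adjoint (U_op m \<theta>) (block m k y) (block m k x)) * expX (pi / 4) (y ! (m * D)) (x ! (m * D))"

definition hadamard_n :: "nat \<Rightarrow> qop" where
  "hadamard_n n y x = (\<Prod>i<n. (if x ! i \<and> y ! i then -1 else 1) / complex_of_real (sqrt 2))"

definition ghz :: "nat \<Rightarrow> qstate" where
  "ghz n x = (if x = replicate n False \<or> x = replicate n True
              then 1 / complex_of_real (sqrt 2) else 0)"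

definition psi :: "nat \<Rightarrow> real \<Rightarrow> nat \<Rightarrow> qstate" where
  "psi m \<theta> n = apply_op n (circuit_op m \<theta> ((n - 1) div m)) (apply_op n (hadamard_n n) (ghz n))"

text \<open>Computational-basis measurement distribution; outcome z of length n is identified
 with (take (n-1) z, z ! (n-1)) in {0,1}^(n-1) x {0,1}.\<close>
definition P_psi :: "nat \<Rightarrow> real \<Rightarrow> nat \<Rightarrow> bool list \<Rightarrow> real" where
  "P_psi m \<theta> n z = (cmod (psi m \<theta> n z))\<^sup>2"

definition target_dist :: "nat \<Rightarrow> nat \<Rightarrow> bool list \<Rightarrow> real" where
  "target_dist p n z =
     (let xs = take (n - 1) z; b = z ! (n - 1) in
      if b = (majmod p xs \<noteq> parity xs) then 1 / 2 ^ (n - 1) else 0)"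

definition tvd :: "'a set \<Rightarrow> ('a \<Rightarrow> real) \<Rightarrow> ('a \<Rightarrow> real) \<Rightarrow> real" where
  "tvd S P Q = (\<Sum>z\<in>S. \<bar>P z - Q z\<bar>) / 2"

end

theory Submission
  imports Defs "HOL-Real_Asymp.Real_Asymp"
begin

lemma bitstrings_finite[simp]: "finite (bitstrings k)"
  unfolding bitstrings_def using finite_lists_length_eq[of "UNIV::bool set" k] by simp

lemma bitstrings_card: "card (bitstrings k) = 2 ^ k"
  unfolding bitstrings_def using card_lists_length_eq[of "UNIV::bool set" k] by simp

lemma mem_bitstrings[simp]: "xs \<in> bitstrings k \<longleftrightarrow> length xs = k"
  unfolding bitstrings_def by simp

lemma bitstrings_append: "bitstrings (a + b) = (\<lambda>(y, z). y @ z) ` (bitstrings a \<times> bitstrings b)"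
proof -
  have "x \<in> (\<lambda>(y, z). y @ z) ` (bitstrings a \<times> bitstrings b)" if "length x = a + b" for x
    using that by (intro image_eqI[of _ _ "(take a x, drop a x)"]) auto
  then show ?thesis by auto
qed

lemma sum_bitstrings_append:
  "(\<Sum>x\<in>bitstrings (a + b). F x) = (\<Sum>y\<in>bitstrings a. \<Sum>z\<in>bitstrings b. F (y @ z))"
proof -
  have inj: "inj_on (\<lambda>(y, z). y @ z) (bitstrings a \<times> bitstrings b)"
    by (auto simp: inj_on_def)
  have "(\<Sum>x\<in>bitstrings (a + b). F x) = (\<Sum>q\<in>bitstrings a \<times> bitstrings b. F ((\<lambda>(y, z). y @ z) q))"
    unfolding bitstrings_append by (rule sum.reindex[OF inj, unfolded comp_def])
  also have "\<dots> = (\<Sum>y\<in>bitstrings a. \<Sum>z\<in>bitstrings b. F (y @ z))"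
    by (simp add: sum.cartesian_product prod.case_distrib)
  finally show ?thesis .
qed

lemma bitstrings_Suc: "bitstrings (Suc k) = (\<lambda>(a, xs). a # xs) ` (UNIV \<times> bitstrings k)"
proof -
  have "x \<in> (\<lambda>(a, xs). a # xs) ` (UNIV \<times> bitstrings k)" if "length x = Suc k" for x
    using that by (intro image_eqI[of _ _ "(hd x, tl x)"]) (cases x; auto)+
  then show ?thesis by auto
qed

lemma sum_bitstrings_Suc:
  "(\<Sum>x\<in>bitstrings (Suc k). F x) = (\<Sum>xs\<in>bitstrings k. F (True # xs) + F (False # xs))"
proof -
  have inj: "inj_on (\<lambda>(a, xs). a # xs) (UNIV \<times> bitstrings k)"
    by (auto simp: inj_on_def)
  have "(\<Sum>x\<in>bitstrings (Suc k). F x) = (\<Sum>q\<in>UNIV \<times> bitstrings k. F ((\<lambda>(a, xs). a # xs) q))"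
    unfolding bitstrings_Suc by (rule sum.reindex[OF inj, unfolded comp_def])
  also have "\<dots> = (\<Sum>a\<in>UNIV. \<Sum>xs\<in>bitstrings k. F (a # xs))"
    by (simp add: sum.cartesian_product prod.case_distrib)
  also have "\<dots> = (\<Sum>xs\<in>bitstrings k. F (True # xs) + F (False # xs))"
    by (simp add: UNIV_bool sum.distrib add.commute)
  finally show ?thesis .
qed

lemma sum_bitstrings_prod:
  fixes g :: "nat \<Rightarrow> bool \<Rightarrow> 'a::comm_ring_1"
  shows "(\<Sum>y\<in>bitstrings k. \<Prod>j<k. g j (y ! j)) = (\<Prod>j<k. g j True + g j False)"
proof (induction k arbitrary: g)
  case 0
  have "bitstrings 0 = {[]}" by (auto simp: bitstrings_def)
  then show ?case by simp
next
  case (Suc k)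
  have "(\<Sum>y\<in>bitstrings (Suc k). \<Prod>j<Suc k. g j (y ! j))
      = (\<Sum>xs\<in>bitstrings k. g 0 True * (\<Prod>j<k. g (Suc j) (xs ! j)) + g 0 False * (\<Prod>j<k. g (Suc j) (xs ! j)))"
    unfolding sum_bitstrings_Suc by (simp add: prod.lessThan_Suc_shift del: prod.lessThan_Suc)
  also have "\<dots> = (g 0 True + g 0 False) * (\<Sum>xs\<in>bitstrings k. \<Prod>j<k. g (Suc j) (xs ! j))"
    by (simp add: sum.distrib sum_distrib_left algebra_simps)
  also have "\<dots> = (\<Prod>j<Suc k. g j True + g j False)"
    using Suc[of "\<lambda>j. g (Suc j)"] by (simp add: prod.lessThan_Suc_shift del: prod.lessThan_Suc)
  finally show ?case .
qed

lemma weight_Cons[simp]: "weight (a # xs) = (if a then 1 else 0) + weight xs"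
  by (simp add: weight_def)
lemma weight_append[simp]: "weight (xs @ ys) = weight xs + weight ys"
  by (simp add: weight_def)
lemma weight_Nil[simp]: "weight [] = 0" by (simp add: weight_def)

lemma prod_if_weight:
  fixes a :: "'a::comm_monoid_mult"
  shows "(\<Prod>i<length xs. if xs ! i then a else 1) = a ^ weight xs"
proof (induction xs)
  case Nil then show ?case by simp
next
  case (Cons x xs) then show ?case
    by (simp add: prod.lessThan_Suc_shift del: prod.lessThan_Suc)
qed

lemma prod_if_weight':
  fixes a :: "'a::comm_monoid_mult"
  shows "length xs = k \<Longrightarrow> (\<Prod>i<k. if xs ! i then a else 1) = a ^ weight xs"
  using prod_if_weight by blast

lemma sum_bitstrings_pow_weight:
  fixes u :: "'a::comm_ring_1"
  shows "(\<Sum>x\<in>bitstrings k. u ^ weight x) = (1 + u) ^ k"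
proof -
  have "(\<Sum>x\<in>bitstrings k. u ^ weight x) = (\<Sum>x\<in>bitstrings k. \<Prod>i<k. if x ! i then u else 1)"
    by (intro sum.cong refl) (simp add: prod_if_weight')
  also have "\<dots> = (1 + u) ^ k" by (subst sum_bitstrings_prod) (simp add: add.commute)
  finally show ?thesis .
qed

lemma block_append_0: "length y = m \<Longrightarrow> block m 0 (y @ x) = y"
  by (simp add: block_def)
lemma block_append_Suc: "length y = m \<Longrightarrow> block m (Suc k) (y @ x) = block m k x"
  by (simp add: block_def add.commute)

lemma b1: "bitstrings (Suc 0) = {[True], [False]}"
proof -
  have "length x = Suc 0 \<Longrightarrow> x = [True] \<or> x = [False]" for x
    by (cases x) auto
  then show ?thesis by (auto simp: bitstrings_def)
qed
lemma sum_blocks: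
  fixes f :: "nat \<Rightarrow> bool list \<Rightarrow> 'a::comm_ring_1"
  shows "(\<Sum>x\<in>bitstrings (m * D + 1). (\<Prod>k<D. f k (block m k x)) * h (x ! (m * D)) * s ^ weight x)
       = (\<Prod>k<D. \<Sum>y\<in>bitstrings m. f k y * s ^ weight y) * (h False + h True * s)"
proof (induction D arbitrary: f)
  case 0
  show ?case by (simp add: b1)
next
  case (Suc D)
  have e: "m * Suc D + 1 = m + (m * D + 1)" by simp
  have pt: "(\<Prod>k<Suc D. f k (block m k (y @ z))) * h ((y @ z) ! (m * Suc D)) * s ^ weight (y @ z)
       = (f 0 y * s ^ weight y) * ((\<Prod>k<D. f (Suc k) (block m k z)) * h (z ! (m * D)) * s ^ weight z)"
    if l: "length y = m" for y z
  proof -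
    have "(\<Prod>k<Suc D. f k (block m k (y @ z))) = f 0 y * (\<Prod>k<D. f (Suc k) (block m k z))"
      by (simp only: prod.lessThan_Suc_shift block_append_0[OF l] block_append_Suc[OF l])
    moreover have "(y @ z) ! (m * Suc D) = z ! (m * D)" using l by (simp add: nth_append)
    ultimately show ?thesis
      by (simp add: power_add mult_ac)
  qed
  have "(\<Sum>x\<in>bitstrings (m * Suc D + 1). (\<Prod>k<Suc D. f k (block m k x)) * h (x ! (m * Suc D)) * s ^ weight x)
    = (\<Sum>y\<in>bitstrings m. \<Sum>z\<in>bitstrings (m * D + 1).
         (f 0 y * s ^ weight y) * ((\<Prod>k<D. f (Suc k) (block m k z)) * h (z ! (m * D)) * s ^ weight z))"
    unfolding e
    by (subst sum_bitstrings_append, rule sum.cong[OF refl], rule sum.cong[OF refl], rule pt) simp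
  also have "\<dots> = (\<Sum>y\<in>bitstrings m. f 0 y * s ^ weight y) *
      ((\<Prod>k<D. \<Sum>y\<in>bitstrings m. f (Suc k) y * s ^ weight y) * (h False + h True * s))"
    by (simp only: Suc[of "\<lambda>k. f (Suc k)"] sum_distrib_left[symmetric] sum_distrib_right)
  also have "\<dots> = (\<Prod>k<Suc D. \<Sum>y\<in>bitstrings m. f k y * s ^ weight y) * (h False + h True * s)"
    by (simp only: prod.lessThan_Suc_shift mult.assoc)
  finally show ?case .
qed

lemma weight_blocks:
  "length x = m * D + 1 \<Longrightarrow> weight x = (\<Sum>k<D. weight (block m k x)) + (if x ! (m * D) then 1 else 0)"
proof (induction D arbitrary: x)
  case 0
  then obtain a where "x = [a]" by (cases x) auto
  then show ?case by simp
next
  case (Suc D)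
  define y where "y = take m x"
  define z where "z = drop m x"
  have x: "x = y @ z" "length y = m" "length z = m * D + 1"
    using Suc.prems by (auto simp: y_def z_def)
  have "weight x = weight y + weight z" using x(1) by simp
  also have "weight z = (\<Sum>k<D. weight (block m k z)) + (if z ! (m * D) then 1 else 0)"
    using Suc.IH[OF x(3)] .
  finally show ?case using x
    by (simp add: sum.lessThan_Suc_shift block_append_0 block_append_Suc nth_append
        del: sum.lessThan_Suc)
qed

lemma hg:
  assumes n: "n \<ge> 1" and x: "length x = n"
  shows "apply_op n (hadamard_n n) (ghz n) x = (1 / complex_of_real (sqrt 2)) ^ (n + 1) * (1 + (-1) ^ weight x)"
proof -
  define a :: complex where "a = 1 / complex_of_real (sqrt 2)"
  have ne: "replicate n False \<noteq> replicate n True" using n by (cases n) auto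
  have g: "ghz n y = (if y = replicate n False then a else 0) + (if y = replicate n True then a else 0)" for y
    using ne by (auto simp: ghz_def a_def)
  have "apply_op n (hadamard_n n) (ghz n) x =
      (\<Sum>y\<in>bitstrings n. (if y = replicate n False then hadamard_n n x y * a else 0))
    + (\<Sum>y\<in>bitstrings n. (if y = replicate n True then hadamard_n n x y * a else 0))"
  proof -
    have pt: "hadamard_n n x y * ghz n y = (if y = replicate n False then hadamard_n n x y * a else 0)
       + (if y = replicate n True then hadamard_n n x y * a else 0)" for y
      unfolding g by (simp add: distrib_left)
    show ?thesis unfolding apply_op_def pt by (rule sum.distrib)
  qed
  also have "\<dots> = hadamard_n n x (replicate n False) * a + hadamard_n n x (replicate n True) * a"
    by (simp add: sum.delta)
  also have "hadamard_n n x (replicate n False) = a ^ n"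
    by (simp add: hadamard_n_def a_def)
  also have "hadamard_n n x (replicate n True) = (\<Prod>i<n. if x ! i then -1 else 1) * a ^ n"
    by (simp add: hadamard_n_def a_def prod.distrib divide_inverse cong: if_cong)
  also have "(\<Prod>i<n. if x ! i then -1 else 1 :: complex) = (-1) ^ weight x"
    using prod_if_weight'[OF x] .
  finally show ?thesis by (simp add: a_def algebra_simps add_divide_distrib)
qed

definition Sblk :: "nat \<Rightarrow> real \<Rightarrow> complex \<Rightarrow> bool list \<Rightarrow> complex" where
  "Sblk m \<theta> s z = (\<Sum>y\<in>bitstrings m. adjoint (U_op m \<theta>) z y * s ^ weight y)"

definition hsum :: "bool \<Rightarrow> complex \<Rightarrow> complex" where
  "hsum b s = expX (pi / 4) b False + expX (pi / 4) b True * s"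

lemma psi_formula:
  assumes m: "m > 0" and n: "n = m * D + 1" and z: "length z = n"
  shows "psi m \<theta> n z = (1 / complex_of_real (sqrt 2)) ^ (n + 1) *
     ((\<Prod>k<D. Sblk m \<theta> 1 (block m k z)) * hsum (z ! (m * D)) 1
    + (\<Prod>k<D. Sblk m \<theta> (-1) (block m k z)) * hsum (z ! (m * D)) (-1))"
proof -
  define \<kappa> :: complex where "\<kappa> = (1 / complex_of_real (sqrt 2)) ^ (n + 1)"
  have D: "(n - 1) div m = D" using m n by simp
  define F where "F x = (\<Prod>k<D. adjoint (U_op m \<theta>) (block m k z) (block m k x)) * expX (pi / 4) (z ! (m * D)) (x ! (m * D))" for x
  have hgn: "apply_op n (hadamard_n n) (ghz n) x = \<kappa> * (1 + (-1) ^ weight x)" if "x \<in> bitstrings n" for x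
    using that by (simp add: hg n \<kappa>_def)
  have "psi m \<theta> n z = (\<Sum>x\<in>bitstrings n. F x * (\<kappa> * (1 + (-1) ^ weight x)))"
    unfolding psi_def D apply_op_def[of n "circuit_op m \<theta> D"]
    by (rule sum.cong[OF refl]) (simp add: hgn F_def circuit_op_def)
  also have "\<dots> = \<kappa> * ((\<Sum>x\<in>bitstrings n. F x * 1 ^ weight x) + (\<Sum>x\<in>bitstrings n. F x * (-1) ^ weight x))"
    by (simp add: sum_distrib_left sum.distrib algebra_simps)
  also have "(\<Sum>x\<in>bitstrings n. F x * 1 ^ weight x) = (\<Prod>k<D. Sblk m \<theta> 1 (block m k z)) * hsum (z ! (m * D)) 1"
    unfolding n F_def Sblk_def hsum_def by (rule sum_blocks)
  also have "(\<Sum>x\<in>bitstrings n. F x * (-1) ^ weight x) = (\<Prod>k<D. Sblk m \<theta> (-1) (block m k z)) * hsum (z ! (m * D)) (-1)"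
    unfolding n F_def Sblk_def hsum_def by (rule sum_blocks)
  finally show ?thesis unfolding \<kappa>_def .
qed

lemma prod_rot:
  fixes m :: nat
  assumes m: "m > 0"
  shows "(\<Prod>j<m. f ((j + m - 1) mod m)) = (\<Prod>j<m. (f j :: 'a::comm_monoid_mult))"
proof -
  obtain m' where m': "m = Suc m'" using m by (cases m) auto
  have "(\<Prod>j<m. f ((j + m - 1) mod m)) = f m' * (\<Prod>j<m'. f ((Suc j + m - 1) mod m))"
    unfolding m' prod.lessThan_Suc_shift by simp
  also have "(\<Prod>j<m'. f ((Suc j + m - 1) mod m)) = (\<Prod>j<m'. f j)"
  proof (intro prod.cong refl)
    fix x assume "x \<in> {..<m'}"
    then have "(Suc x + m - 1) mod m = (x + m) mod m" "x < m" by (auto simp: m')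
    then show "f ((Suc x + m - 1) mod m) = f x" by simp
  qed
  finally show ?thesis by (simp add: m' mult.commute)
qed

definition Xs :: "nat \<Rightarrow> real \<Rightarrow> complex \<Rightarrow> bool list \<Rightarrow> complex" where
  "Xs m \<theta> s z = (\<Sum>y\<in>bitstrings m. M_op m \<theta> y z * s ^ weight y)"

definition Gf :: "nat \<Rightarrow> real \<Rightarrow> bool list \<Rightarrow> nat \<Rightarrow> bool \<Rightarrow> complex" where
  "Gf m \<theta> z j a = (if z ! ((j + m - 1) mod m) then expX \<theta> a (z ! j) else (if a = z ! j then 1 else 0))"

lemma M_op_prod: "M_op m \<theta> y z = (\<Prod>j<m. Gf m \<theta> z j (y ! j))"
  by (simp add: M_op_def Gf_def)

lemma Xs_plus:
  assumes m: "m > 0" and z: "length z = m"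
  shows "Xs m \<theta> 1 z = cis (-\<theta>) ^ weight z"
proof -
  have "Xs m \<theta> 1 z = (\<Prod>j<m. Gf m \<theta> z j True + Gf m \<theta> z j False)"
    unfolding Xs_def power_one mult_1_right M_op_prod by (rule sum_bitstrings_prod)
  also have "\<dots> = (\<Prod>j<m. if z ! ((j + m - 1) mod m) then cis (-\<theta>) else 1)"
    by (intro prod.cong refl) (auto simp: Gf_def expX_def cis.ctr complex_eq_iff)
  also have "\<dots> = (\<Prod>j<m. if z ! j then cis (-\<theta>) else 1)"
    using prod_rot[OF m, of "\<lambda>j. if z ! j then cis (-\<theta>) else 1"] by simp
  also have "\<dots> = cis (-\<theta>) ^ weight z" using prod_if_weight'[OF z] .
  finally show ?thesis .
qed

lemma Xs_minus:
  assumes m: "m > 0" and z: "length z = m"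
  shows "Xs m \<theta> (-1) z = (-1) ^ weight z * cis \<theta> ^ weight z"
proof -
  define H where "H j a = Gf m \<theta> z j a * (if a then -1 else 1)" for j a
  have "Xs m \<theta> (-1) z = (\<Sum>y\<in>bitstrings m. \<Prod>j<m. H j (y ! j))"
    unfolding Xs_def M_op_prod H_def
    by (intro sum.cong refl) (simp add: prod.distrib prod_if_weight')
  also have "\<dots> = (\<Prod>j<m. H j True + H j False)" by (rule sum_bitstrings_prod)
  also have "\<dots> = (\<Prod>j<m. (if z ! j then -1 else 1) * (if z ! ((j + m - 1) mod m) then cis \<theta> else 1))"
    by (intro prod.cong refl) (auto simp: H_def Gf_def expX_def cis.ctr complex_eq_iff)
  also have "\<dots> = (\<Prod>j<m. if z ! j then -1 else 1) * (\<Prod>j<m. if z ! j then cis \<theta> else 1)"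
    using prod_rot[OF m, of "\<lambda>j. if z ! j then cis \<theta> else 1"] by (simp add: prod.distrib)
  also have "\<dots> = (-1) ^ weight z * cis \<theta> ^ weight z" by (simp only: prod_if_weight'[OF z])
  finally show ?thesis .
qed

lemma gamma_norm:
  assumes m: "m > 0" and z: "length z = m"
  shows "cmod (gamma m \<theta> z) = \<bar>sin \<theta>\<bar> ^ m"
proof -
  have cb: "compl_bits z ! i = (\<not> z ! i)" if "i < m" for i
    using that z by (simp add: compl_bits_def)
  have cb': "compl_bits z ! ((j + m - 1) mod m) = (\<not> z ! ((j + m - 1) mod m))" for j
    using m by (intro cb) simp
  define H where "H j a = cnj (Gf m \<theta> (compl_bits z) j a) * Gf m \<theta> z j a" for j a
  have "gamma m \<theta> z = (\<Sum>y\<in>bitstrings m. \<Prod>j<m. H j (y ! j))"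
    unfolding gamma_def M_op_prod H_def
    by (intro sum.cong refl) (simp add: prod.distrib cnj_prod)
  also have "\<dots> = (\<Prod>j<m. H j True + H j False)" by (rule sum_bitstrings_prod)
  also have "\<dots> = (\<Prod>j<m. if z ! ((j + m - 1) mod m) then - \<i> * sin \<theta> else \<i> * sin \<theta>)"
  proof (intro prod.cong refl)
    fix j assume j: "j \<in> {..<m}"
    have "Gf m \<theta> (compl_bits z) j a = (if \<not> z ! ((j + m - 1) mod m) then expX \<theta> a (\<not> z ! j) else (if a = (\<not> z ! j) then 1 else 0))" for a
      unfolding Gf_def cb' using j cb by simp
    then show "H j True + H j False = (if z ! ((j + m - 1) mod m) then - \<i> * sin \<theta> else \<i> * sin \<theta>)"
      by (auto simp: H_def Gf_def[of m \<theta> z] expX_def complex_eq_iff)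
  qed
  finally have "cmod (gamma m \<theta> z) = (\<Prod>j<m. cmod (if z ! ((j + m - 1) mod m) then - \<i> * sin \<theta> else \<i> * sin \<theta>))"
    by (simp add: prod_norm)
  also have "\<dots> = (\<Prod>j<m. \<bar>sin \<theta>\<bar>)"
    by (intro prod.cong refl) (simp add: norm_mult)
  finally show ?thesis by simp
qed

lemma Xs_norm:
  assumes m: "m > 0" and z: "length z = m" and s: "s = 1 \<or> s = -1"
  shows "cmod (Xs m \<theta> s z) = 1"
  using s Xs_plus[OF m z, of \<theta>] Xs_minus[OF m z, of \<theta>] by (auto simp: norm_mult norm_power)

lemma Sblk_eq:
  assumes s: "cnj s = s"
  shows "Sblk m \<theta> s z = cnj (if \<not> z ! 0 then Xs m \<theta> s z
     else (Xs m \<theta> s z - gamma m \<theta> z * Xs m \<theta> s (compl_bits z)) / complex_of_real (sqrt (1 - (cmod (gamma m \<theta> z))\<^sup>2)))"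
proof (cases "z ! 0")
  case False
  then show ?thesis unfolding Sblk_def Xs_def adjoint_def U_op_def
    by (simp add: cnj_sum s)
next
  case True
  then show ?thesis unfolding Sblk_def Xs_def adjoint_def U_op_def
    by (simp add: cnj_sum s sum_divide_distrib[symmetric] sum_subtractf sum_distrib_left
        algebra_simps)
qed

lemma pert_bound:
  fixes a b \<gamma> :: complex
  assumes a: "cmod a = 1" and b: "cmod b = 1" and g: "cmod \<gamma> \<le> 1/2"
  shows "cmod ((a - \<gamma> * b) / complex_of_real (sqrt (1 - (cmod \<gamma>)\<^sup>2)) - a) \<le> 4 * cmod \<gamma>"
proof -
  define g where "g = cmod \<gamma>"
  define r where "r = sqrt (1 - g\<^sup>2)"
  have g0: "0 \<le> g" by (simp add: g_def)
  have g2: "g\<^sup>2 \<le> g" using g g0 unfolding g_def[symmetric] by (simp add: power2_eq_square mult_left_le_one_le)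
  have g1: "g \<le> 1/2" using g by (simp add: g_def)
  have g21: "g\<^sup>2 \<le> 1" using g2 g1 by linarith
  have r2: "r\<^sup>2 = 1 - g\<^sup>2" unfolding r_def by (rule real_sqrt_pow2) (use g21 in linarith)
  have r0: "0 \<le> r" unfolding r_def by (rule real_sqrt_ge_zero) (use g21 in linarith)
  have rh: "r \<ge> 1/2"
  proof -
    have "(1/2)\<^sup>2 \<le> 1 - g\<^sup>2" using g2 g1 by (simp add: power2_eq_square)
    then show ?thesis unfolding r_def by (rule real_le_rsqrt)
  qed
  have r1: "r \<le> 1" unfolding r_def by simp
  have c1: "cmod (1 - complex_of_real r) = 1 - r"
    using r1 by (metis abs_of_nonneg norm_of_real of_real_1 of_real_diff diff_ge_0_iff_ge)
  have "1 - r \<le> g\<^sup>2"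
  proof -
    have "1 - r \<le> (1 - r) * (1 + r)" using r0 r1 by (simp add: mult_le_cancel_left1)
    also have "\<dots> = g\<^sup>2" using r2 by (simp add: algebra_simps power2_eq_square)
    finally show ?thesis .
  qed
  have "(a - \<gamma> * b) / complex_of_real r - a = a * complex_of_real ((1 - r) / r) - \<gamma> * b / complex_of_real r"
    using rh by (simp add: field_simps)
  then have "cmod ((a - \<gamma> * b) / complex_of_real r - a) \<le> cmod (a * complex_of_real ((1 - r) / r)) + cmod (\<gamma> * b / complex_of_real r)"
    by (metis norm_triangle_ineq4)
  also have "\<dots> = (1 - r) / r + g / r" using a b r0 r1 rh c1 by (simp add: norm_mult norm_divide g_def)
  also have "\<dots> \<le> 2 * g + 2 * g"
  proof -
    have "(1 - r) / r \<le> 2 * (1 - r)"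
    proof -
      have "0 \<le> (1-r)*(2*r-1)" using rh r1 by (intro mult_nonneg_nonneg) auto
      then have "1 - r \<le> 2 * (1 - r) * r" by (simp add: algebra_simps)
      then show ?thesis using rh by (simp add: pos_divide_le_eq)
    qed
    moreover have "g / r \<le> 2 * g"
    proof -
      have "g * 1 \<le> g * (2 * r)" using rh g0 by (intro mult_left_mono) auto
      then show ?thesis using rh by (simp add: pos_divide_le_eq mult_ac)
    qed
    moreover have "2 * (1 - r) \<le> 2 * g" using \<open>1 - r \<le> g\<^sup>2\<close> g2 by (smt (verit))
    ultimately show ?thesis by (meson add_mono order_trans)
  qed
  finally show ?thesis unfolding r_def g_def by simp
qed

lemma Sblk_err:
  assumes m: "m > 0" and z: "length z = m" and s: "s = 1 \<or> s = -1" and g: "\<bar>sin \<theta>\<bar> ^ m \<le> 1/2"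
  shows "cmod (Sblk m \<theta> s z - cnj (Xs m \<theta> s z)) \<le> 4 * \<bar>sin \<theta>\<bar> ^ m"
proof -
  have cs: "cnj s = s" using s by auto
  have lc: "length (compl_bits z) = m" using z by (simp add: compl_bits_def)
  show ?thesis
  proof (cases "z ! 0")
    case False
    then show ?thesis by (simp add: Sblk_eq[OF cs])
  next
    case True
    have "cmod (Sblk m \<theta> s z - cnj (Xs m \<theta> s z)) =
       cmod ((Xs m \<theta> s z - gamma m \<theta> z * Xs m \<theta> s (compl_bits z)) / complex_of_real (sqrt (1 - (cmod (gamma m \<theta> z))\<^sup>2)) - Xs m \<theta> s z)"
    proof -
      have e: "cnj w - cnj v = cnj (w - v)" for w v by simp
      show ?thesis using True by (simp only: Sblk_eq[OF cs] e complex_mod_cnj if_False not_True_eq_False)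
    qed
    also have "\<dots> \<le> 4 * cmod (gamma m \<theta> z)"
      by (rule pert_bound) (use Xs_norm[OF m z s] Xs_norm[OF m lc s] gamma_norm[OF m z] g in auto)
    finally show ?thesis using gamma_norm[OF m z] by simp
  qed
qed

lemma prod_pert:
  fixes a b :: "nat \<Rightarrow> complex"
  assumes ab: "\<And>k. k < D \<Longrightarrow> cmod (a k - b k) \<le> \<delta>" and b: "\<And>k. k < D \<Longrightarrow> cmod (b k) = 1"
  shows "cmod ((\<Prod>k<D. a k) - (\<Prod>k<D. b k)) \<le> (1 + \<delta>) ^ D - 1"
  using ab b
proof (induction D)
  case 0 then show ?case by simp
next
  case (Suc D)
  have d0: "0 \<le> \<delta>" using Suc.prems(1)[of 0] by (meson norm_ge_zero order_trans zero_less_Suc)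
  have na: "cmod (a k) \<le> 1 + \<delta>" if "k < Suc D" for k
    using Suc.prems(1)[OF that] Suc.prems(2)[OF that] norm_triangle_ineq2[of "a k" "b k"] by simp
  have NA: "cmod (\<Prod>k<D. a k) \<le> (1 + \<delta>) ^ D"
  proof -
    have "cmod (\<Prod>k<D. a k) = (\<Prod>k<D. cmod (a k))" by (simp add: prod_norm)
    also have "\<dots> \<le> (\<Prod>k<D. 1 + \<delta>)" by (rule prod_mono) (auto intro: na)
    finally show ?thesis by simp
  qed
  have IH: "cmod ((\<Prod>k<D. a k) - (\<Prod>k<D. b k)) \<le> (1 + \<delta>) ^ D - 1"
    using Suc by simp
  have "(\<Prod>k<Suc D. a k) - (\<Prod>k<Suc D. b k) = (a D - b D) * (\<Prod>k<D. a k) + b D * ((\<Prod>k<D. a k) - (\<Prod>k<D. b k))"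
    by (simp add: algebra_simps)
  then have "cmod ((\<Prod>k<Suc D. a k) - (\<Prod>k<Suc D. b k)) \<le> cmod (a D - b D) * cmod (\<Prod>k<D. a k) + cmod (b D) * cmod ((\<Prod>k<D. a k) - (\<Prod>k<D. b k))"
    by (metis norm_mult norm_triangle_ineq)
  also have "\<dots> \<le> \<delta> * (1 + \<delta>) ^ D + 1 * ((1 + \<delta>) ^ D - 1)"
    using Suc.prems NA IH d0 by (intro add_mono mult_mono) auto
  also have "\<dots> = (1 + \<delta>) ^ Suc D - 1" by (simp add: algebra_simps)
  finally show ?case .
qed

lemma hsum_plus: "hsum b 1 = cis (- (pi / 4))"
  by (cases b) (simp_all add: hsum_def expX_def cis.ctr complex_eq_iff)

lemma hsum_minus: "hsum b (-1) = (if b then -1 else 1) * cis (pi / 4)"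
  by (cases b) (simp_all add: hsum_def expX_def cis.ctr complex_eq_iff)

lemma sq_diff_bound:
  fixes u v :: complex
  shows "\<bar>(cmod u)\<^sup>2 - (cmod v)\<^sup>2\<bar> \<le> cmod (u - v) * (cmod (u - v) + 2 * cmod v)"
proof -
  define d where "d = cmod (u - v)"
  have "\<bar>cmod u - cmod v\<bar> \<le> d" unfolding d_def by (rule norm_triangle_ineq3)
  moreover have "cmod u + cmod v \<le> d + 2 * cmod v" using calculation by linarith
  ultimately have "\<bar>cmod u - cmod v\<bar> * (cmod u + cmod v) \<le> d * (d + 2 * cmod v)"
    by (intro mult_mono) auto
  moreover have "\<bar>(cmod u)\<^sup>2 - (cmod v)\<^sup>2\<bar> = \<bar>cmod u - cmod v\<bar> * (cmod u + cmod v)"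
  proof -
    have "(cmod u)\<^sup>2 - (cmod v)\<^sup>2 = (cmod u - cmod v) * (cmod u + cmod v)"
      by (simp add: power2_eq_square algebra_simps)
    then show ?thesis by (simp add: abs_mult)
  qed
  ultimately show ?thesis unfolding d_def by simp
qed

definition psi0 :: "nat \<Rightarrow> real \<Rightarrow> nat \<Rightarrow> bool list \<Rightarrow> complex" where
  "psi0 m \<theta> D z = (1 / complex_of_real (sqrt 2)) ^ (m * D + 2) *
     ((\<Prod>k<D. cnj (Xs m \<theta> 1 (block m k z))) * hsum (z ! (m * D)) 1
    + (\<Prod>k<D. cnj (Xs m \<theta> (-1) (block m k z))) * hsum (z ! (m * D)) (-1))"

lemma length_block: "k < D \<Longrightarrow> length z = m * D + 1 \<Longrightarrow> length (block m k z) = m"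
proof -
  assume k: "k < D" and z: "length z = m * D + 1"
  have "k * m + m \<le> m * D" using k by (metis add.commute mult.commute mult_Suc_right mult_le_mono2 Suc_leI)
  then show ?thesis using z by (simp add: block_def)
qed

lemma P_close:
  assumes m: "m > 0" and n: "n = m * D + 1" and z: "length z = n" and g: "\<bar>sin \<theta>\<bar> ^ m \<le> 1/2"
  shows "\<bar>P_psi m \<theta> n z - (cmod (psi0 m \<theta> D z))\<^sup>2\<bar> \<le> (1/2) ^ (n - 1) * (((1 + 4 * \<bar>sin \<theta>\<bar> ^ m) ^ D - 1) * (2 + ((1 + 4 * \<bar>sin \<theta>\<bar> ^ m) ^ D - 1)))"
proof -
  define \<eta> where "\<eta> = (1 + 4 * \<bar>sin \<theta>\<bar> ^ m) ^ D - 1"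
  define \<kappa> :: complex where "\<kappa> = (1 / complex_of_real (sqrt 2)) ^ (n + 1)"
  define A where "A s = (\<Prod>k<D. Sblk m \<theta> s (block m k z))" for s
  define B where "B s = (\<Prod>k<D. cnj (Xs m \<theta> s (block m k z)))" for s
  define b where "b = z ! (m * D)"
  have lb: "length (block m k z) = m" if "k < D" for k using length_block[OF that] z n by simp
  have AB: "cmod (A s - B s) \<le> \<eta>" if s: "s = 1 \<or> s = -1" for s
    unfolding A_def B_def \<eta>_def
    by (rule prod_pert) (use Sblk_err[OF m lb s g] Xs_norm[OF m lb s] in auto)
  have Bn: "cmod (B s) = 1" if s: "s = 1 \<or> s = -1" for s
    unfolding B_def prod_norm[symmetric] using Xs_norm[OF m lb s] by simp
  have \<eta>0: "0 \<le> \<eta>" using AB[of 1] by (meson norm_ge_zero order_trans)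
  have h1: "cmod (hsum b 1) = 1" "cmod (hsum b (-1)) = 1"
    by (simp_all add: hsum_plus hsum_minus norm_mult)
  have psi: "psi m \<theta> n z = \<kappa> * (A 1 * hsum b 1 + A (-1) * hsum b (-1))"
    unfolding psi_formula[OF m n z] A_def \<kappa>_def b_def ..
  have psi0: "psi0 m \<theta> D z = \<kappa> * (B 1 * hsum b 1 + B (-1) * hsum b (-1))"
    unfolding psi0_def B_def \<kappa>_def b_def n by (simp add: numeral_2_eq_2)
  have kn: "cmod \<kappa> ^ 2 = (1/2) ^ (n + 1)"
  proof -
    have "cmod \<kappa> = (1 / sqrt 2) ^ (n + 1)" unfolding \<kappa>_def by (simp add: norm_power norm_divide)
    also have "((1 / sqrt 2) ^ (n + 1)) ^ 2 = ((1 / sqrt 2) ^ 2) ^ (n + 1)"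
      by (simp only: power_mult[symmetric] mult.commute)
    also have "(1 / sqrt 2) ^ 2 = 1 / (2::real)" by (simp add: power_divide)
    finally show ?thesis .
  qed
  have "psi m \<theta> n z - psi0 m \<theta> D z = \<kappa> * ((A 1 - B 1) * hsum b 1 + (A (-1) - B (-1)) * hsum b (-1))"
    unfolding psi psi0 by (simp add: algebra_simps)
  moreover have "cmod ((A 1 - B 1) * hsum b 1 + (A (-1) - B (-1)) * hsum b (-1)) \<le> \<eta> + \<eta>"
  proof -
    have "cmod ((A 1 - B 1) * hsum b 1 + (A (-1) - B (-1)) * hsum b (-1))
       \<le> cmod ((A 1 - B 1) * hsum b 1) + cmod ((A (-1) - B (-1)) * hsum b (-1))" by (rule norm_triangle_ineq)
    also have "\<dots> = cmod (A 1 - B 1) + cmod (A (-1) - B (-1))" by (simp add: norm_mult h1)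
    also have "\<dots> \<le> \<eta> + \<eta>" using AB[of 1] AB[of "-1"] by simp
    finally show ?thesis .
  qed
  ultimately have d: "cmod (psi m \<theta> n z - psi0 m \<theta> D z) \<le> cmod \<kappa> * (2 * \<eta>)"
    by (simp add: norm_mult mult_left_mono)
  have "cmod (B 1 * hsum b 1 + B (-1) * hsum b (-1)) \<le> 2"
  proof -
    have "cmod (B 1 * hsum b 1 + B (-1) * hsum b (-1))
       \<le> cmod (B 1 * hsum b 1) + cmod (B (-1) * hsum b (-1))" by (rule norm_triangle_ineq)
    also have "\<dots> = 2" by (simp add: norm_mult h1 Bn)
    finally show ?thesis .
  qed
  then have p0: "cmod (psi0 m \<theta> D z) \<le> cmod \<kappa> * 2"
    unfolding psi0 by (simp add: norm_mult mult_left_mono)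
  have "\<bar>P_psi m \<theta> n z - (cmod (psi0 m \<theta> D z))\<^sup>2\<bar> \<le> (cmod \<kappa> * (2 * \<eta>)) * (cmod \<kappa> * (2 * \<eta>) + 2 * (cmod \<kappa> * 2))"
    unfolding P_psi_def
    by (rule order_trans[OF sq_diff_bound]) (intro mult_mono add_mono d p0 order_refl, auto simp: \<eta>0)
  also have "\<dots> = 4 * cmod \<kappa> ^ 2 * (\<eta> * (2 + \<eta>))" by (simp add: algebra_simps power2_eq_square)
  also have "\<dots> = (1/2) ^ (n - 1) * (\<eta> * (2 + \<eta>))"
    unfolding kn using n by (simp add: power_add)
  finally show ?thesis unfolding \<eta>_def .
qed

lemma block_take:
  assumes "k < D" "length x = m * D"
  shows "block m k (x @ [b]) = block m k x"
proof -
  have "k * m + m \<le> m * D" using assms(1) by (metis add.commute mult.commute mult_Suc_right mult_le_mono2 Suc_leI)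
  then show ?thesis using assms by (simp add: block_def)
qed

lemma weight_sum_blocks:
  assumes x: "length x = m * D"
  shows "(\<Sum>k<D. weight (block m k (x @ [b]))) = weight x"
proof -
  have "(x @ [b]) ! (m * D) = b" using x by (simp add: nth_append)
  then show ?thesis using weight_blocks[of "x @ [b]" m D] x by simp
qed

lemma cis_pm_sq:
  fixes \<tau> :: complex
  assumes "\<tau> = 1 \<or> \<tau> = -1"
  shows "(cmod (cis \<phi> + \<tau> * cis (- \<phi>)))\<^sup>2 = 2 + 2 * Re \<tau> * cos (2 * \<phi>)"
  using assms
proof
  assume t: "\<tau> = 1"
  have "cis \<phi> + \<tau> * cis (- \<phi>) = complex_of_real (2 * cos \<phi>)" using t by (simp add: complex_eq_iff)
  then have "(cmod (cis \<phi> + \<tau> * cis (- \<phi>)))\<^sup>2 = 2 * (2 * (cos \<phi>)\<^sup>2)"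
    by (simp add: power2_eq_square abs_mult_self_eq)
  then show ?thesis using t by (simp add: cos_double_cos)
next
  assume t: "\<tau> = -1"
  have "cis \<phi> + \<tau> * cis (- \<phi>) = \<i> * complex_of_real (2 * sin \<phi>)" using t by (simp add: complex_eq_iff)
  then have "cmod (cis \<phi> + \<tau> * cis (- \<phi>)) = \<bar>2 * sin \<phi>\<bar>" by (simp add: norm_mult)
  then have "(cmod (cis \<phi> + \<tau> * cis (- \<phi>)))\<^sup>2 = 2 * (2 * (sin \<phi>)\<^sup>2)"
    by (simp add: power2_eq_square abs_mult_self_eq)
  then show ?thesis using t by (simp add: cos_double_sin)
qed

lemma psi0_sq:
  assumes m: "m > 0" and x: "length x = m * D"
  shows "(cmod (psi0 m \<theta> D (x @ [b])))\<^sup>2 =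
    (1/2) ^ (m * D + 1) * (1 + (if b = odd (weight x) then 1 else -1) * sin (2 * \<theta> * real (weight x)))"
proof -
  define W where "W = weight x"
  define \<tau> :: complex where "\<tau> = (-1) ^ W * (if b then -1 else 1)"
  have lb: "length (block m k x) = m" if "k < D" for k
  proof -
    have "k * m + m \<le> m * D" using that by (metis add.commute mult.commute mult_Suc_right mult_le_mono2 Suc_leI)
    then show ?thesis using x by (simp add: block_def)
  qed
  have wsum: "(\<Sum>k<D. weight (block m k x)) = W"
    using weight_sum_blocks[OF x, of b] by (simp add: block_take[OF _ x] W_def)
  have B1: "(\<Prod>k<D. cnj (Xs m \<theta> 1 (block m k (x @ [b])))) = cis (real W * \<theta>)"
  proof -
    have "(\<Prod>k<D. cnj (Xs m \<theta> 1 (block m k (x @ [b])))) = (\<Prod>k<D. cis \<theta> ^ weight (block m k x))"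
      by (intro prod.cong refl) (simp add: block_take[OF _ x] Xs_plus[OF m lb] cis_cnj)
    also have "\<dots> = cis \<theta> ^ W" by (simp add: power_sum[symmetric] wsum)
    finally show ?thesis by (simp add: DeMoivre)
  qed
  have B2: "(\<Prod>k<D. cnj (Xs m \<theta> (-1) (block m k (x @ [b])))) = (-1) ^ W * cis (- (real W * \<theta>))"
  proof -
    have "(\<Prod>k<D. cnj (Xs m \<theta> (-1) (block m k (x @ [b])))) = (\<Prod>k<D. (-1) ^ weight (block m k x) * cis (-\<theta>) ^ weight (block m k x))"
      by (intro prod.cong refl) (simp add: block_take[OF _ x] Xs_minus[OF m lb] cis_cnj)
    also have "\<dots> = (-1) ^ W * cis (-\<theta>) ^ W" by (simp add: power_sum[symmetric] wsum prod.distrib)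
    finally show ?thesis by (simp add: DeMoivre)
  qed
  have bb: "(x @ [b]) ! (m * D) = b" using x by (metis nth_append_length)
  have "psi0 m \<theta> D (x @ [b]) = (1 / complex_of_real (sqrt 2)) ^ (m * D + 2) *
      (cis (real W * \<theta> - pi / 4) + \<tau> * cis (- (real W * \<theta> - pi / 4)))"
  proof -
    have e1: "cis (real W * \<theta>) * cis (- (pi / 4)) = cis (real W * \<theta> - pi / 4)"
      by (simp add: cis_mult)
    have e2: "(-1) ^ W * cis (- (real W * \<theta>)) * ((if b then -1 else 1) * cis (pi / 4)) = \<tau> * cis (- (real W * \<theta> - pi / 4))"
    proof -
      have "cis (- (real W * \<theta>)) * cis (pi / 4) = cis (- (real W * \<theta> - pi / 4))"
        by (simp add: cis_mult)
      then show ?thesis unfolding \<tau>_def by (simp add: mult_ac)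
    qed
    show ?thesis
      unfolding psi0_def B1 B2 bb hsum_plus hsum_minus e1 e2 by simp
  qed
  then have "(cmod (psi0 m \<theta> D (x @ [b])))\<^sup>2 = (cmod ((1 / complex_of_real (sqrt 2)) ^ (m * D + 2)))\<^sup>2 *
      (cmod (cis (real W * \<theta> - pi / 4) + \<tau> * cis (- (real W * \<theta> - pi / 4))))\<^sup>2"
    by (simp only: norm_mult power_mult_distrib)
  also have "cmod ((1 / complex_of_real (sqrt 2)) ^ (m * D + 2)) = (1 / sqrt 2) ^ (m * D + 2)"
    by (subst norm_power) (simp add: norm_divide)
  also have "((1 / sqrt 2) ^ (m * D + 2))\<^sup>2 = (1/2) ^ (m * D + 2)"
  proof -
    have "((1 / sqrt 2) ^ (m * D + 2))\<^sup>2 = ((1 / sqrt 2)\<^sup>2) ^ (m * D + 2)"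
      by (simp only: power_mult[symmetric] mult.commute)
    then show ?thesis by (simp add: power_divide)
  qed
  also have "(cmod (cis (real W * \<theta> - pi / 4) + \<tau> * cis (- (real W * \<theta> - pi / 4))))\<^sup>2
      = 2 + 2 * Re \<tau> * cos (2 * (real W * \<theta> - pi / 4))"
    by (rule cis_pm_sq) (cases "even W"; auto simp: \<tau>_def)
  also have "cos (2 * (real W * \<theta> - pi / 4)) = sin (2 * \<theta> * real W)"
    by (simp add: algebra_simps cos_diff)
  also have "Re \<tau> = (if b = odd W then 1 else -1)"
    by (cases "even W"; auto simp: \<tau>_def)
  finally show ?thesis by (simp add: W_def algebra_simps)
qed

lemma sin_add_2pi_nat: "sin (x + 2 * pi * real q) = sin x"
proof (induction q)
  case 0 then show ?case by simp
next
  case (Suc q)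
  have "x + 2 * pi * real (Suc q) = (x + 2 * pi * real q) + 2 * pi" by (simp add: algebra_simps)
  then show ?case using Suc by (simp only: sin_periodic)
qed

lemma sin_mod:
  assumes p: "p > 0"
  shows "sin (2 * (pi / real p) * real W) = sin (2 * pi * real (W mod p) / real p)"
proof -
  have W: "real W = real (W mod p) + real p * real (W div p)"
    by (metis mod_div_mult_eq of_nat_add of_nat_mult add.commute mult.commute)
  have "2 * (pi / real p) * real W = 2 * pi * real (W mod p) / real p + 2 * pi * real (W div p)"
    unfolding W using p by (simp add: field_simps)
  then show ?thesis by (simp add: sin_add_2pi_nat)
qed

lemma majmod_sin:
  assumes p: "p > 0"
  shows "majmod p x \<Longrightarrow> sin (2 * (pi / real p) * real (weight x)) \<le> 0"
    and "\<not> majmod p x \<Longrightarrow> sin (2 * (pi / real p) * real (weight x)) \<ge> 0"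
proof -
  define r where "r = weight x mod p"
  have rp: "real r < real p" using p by (simp add: r_def)
  have s: "sin (2 * (pi / real p) * real (weight x)) = sin (2 * pi * real r / real p)"
    unfolding r_def by (rule sin_mod[OF p])
  show "majmod p x \<Longrightarrow> sin (2 * (pi / real p) * real (weight x)) \<le> 0"
  proof -
    assume "majmod p x"
    then have "real p / 2 \<le> real r" by (simp add: majmod_def r_def)
    then have "pi \<le> 2 * pi * real r / real p" "2 * pi * real r / real p < 2 * pi"
      using p rp by (simp_all add: field_simps)
    then show ?thesis unfolding s by (rule sin_le_zero)
  qed
  show "\<not> majmod p x \<Longrightarrow> sin (2 * (pi / real p) * real (weight x)) \<ge> 0"
  proof -
    assume "\<not> majmod p x"
    then have "real r < real p / 2" by (simp add: majmod_def r_def)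
    then have "0 \<le> 2 * pi * real r / real p" "2 * pi * real r / real p \<le> pi"
      using p by (simp_all add: field_simps)
    then show ?thesis unfolding s by (rule sin_ge_zero)
  qed
qed

lemma tvd0_eq:
  assumes m: "m > 0" and n: "n = m * D + 1" and p: "p > 0"
  shows "(\<Sum>z\<in>bitstrings n. \<bar>(cmod (psi0 m (pi / real p) D z))\<^sup>2 - target_dist p n z\<bar>)
     = (1/2) ^ (n - 1) * (\<Sum>x\<in>bitstrings (n - 1). 1 - \<bar>sin (2 * (pi / real p) * real (weight x))\<bar>)"
proof -
  define N where "N = m * D"
  have nN: "n = N + 1" "n - 1 = N" using n by (simp_all add: N_def)
  have b1: "bitstrings 1 = {[True], [False]}"
  proof -
    have "length x = Suc 0 \<Longrightarrow> x = [True] \<or> x = [False]" for x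
      by (cases x) auto
    then show ?thesis by (auto simp: bitstrings_def)
  qed
  have pt: "(\<Sum>y\<in>bitstrings 1. \<bar>(cmod (psi0 m (pi / real p) D (x @ y)))\<^sup>2 - target_dist p n (x @ y)\<bar>)
      = (1/2) ^ N * (1 - \<bar>sin (2 * (pi / real p) * real (weight x))\<bar>)" if x: "length x = N" for x
  proof -
    define sv where "sv = sin (2 * (pi / real p) * real (weight x))"
    have sv1: "\<bar>sv\<bar> \<le> 1" by (simp add: sv_def)
    have tk: "take N (x @ [b]) = x" "(x @ [b]) ! N = b" for b
      using x by (simp_all add: nth_append)
    have P0: "(cmod (psi0 m (pi / real p) D (x @ [b])))\<^sup>2 = (1/2) ^ N * ((1 + (if b = odd (weight x) then 1 else -1) * sv) / 2)" for b
      using psi0_sq[OF m x[unfolded N_def], of "pi / real p" b] by (simp add: sv_def N_def)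
    have Q: "target_dist p n (x @ [b]) = (1/2) ^ N * (if b = (majmod p x \<noteq> parity x) then 1 else 0)" for b
      unfolding target_dist_def Let_def nN(2) tk by (auto simp: power_one_over)
    have par: "parity x = odd (weight x)" by (simp add: parity_def)
    have "(\<Sum>y\<in>bitstrings 1. \<bar>(cmod (psi0 m (pi / real p) D (x @ y)))\<^sup>2 - target_dist p n (x @ y)\<bar>)
       = (1/2) ^ N * (\<bar>(1 + (if True = odd (weight x) then 1 else -1) * sv) / 2 - (if True = (majmod p x \<noteq> parity x) then 1 else 0)\<bar>
          + \<bar>(1 + (if False = odd (weight x) then 1 else -1) * sv) / 2 - (if False = (majmod p x \<noteq> parity x) then 1 else 0)\<bar>)"
    proof -
      have e: "\<bar>(cmod (psi0 m (pi / real p) D (x @ [b])))\<^sup>2 - target_dist p n (x @ [b])\<bar>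
        = (1/2) ^ N * \<bar>(1 + (if b = odd (weight x) then 1 else -1) * sv) / 2 - (if b = (majmod p x \<noteq> parity x) then 1 else 0)\<bar>" for b
        unfolding P0 Q by (simp only: right_diff_distrib[symmetric] abs_mult) simp
      show ?thesis unfolding b1 by (simp add: e distrib_left)
    qed
    also have "\<dots> = (1/2) ^ N * (1 - \<bar>sv\<bar>)"
    proof (cases "majmod p x")
      case True
      then have "sv \<le> 0" using majmod_sin(1)[OF p] by (simp add: sv_def)
      then show ?thesis using True sv1 unfolding par by (cases "odd (weight x)") (auto simp: abs_if field_simps)
    next
      case False
      then have "sv \<ge> 0" using majmod_sin(2)[OF p] by (simp add: sv_def)
      then show ?thesis using False sv1 unfolding par by (cases "odd (weight x)") (auto simp: abs_if field_simps)
    qed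
    finally show ?thesis unfolding sv_def .
  qed
  have "(\<Sum>z\<in>bitstrings n. \<bar>(cmod (psi0 m (pi / real p) D z))\<^sup>2 - target_dist p n z\<bar>)
     = (\<Sum>x\<in>bitstrings N. \<Sum>y\<in>bitstrings 1. \<bar>(cmod (psi0 m (pi / real p) D (x @ y)))\<^sup>2 - target_dist p n (x @ y)\<bar>)"
    unfolding nN(1) by (rule sum_bitstrings_append)
  also have "\<dots> = (\<Sum>x\<in>bitstrings N. (1/2) ^ N * (1 - \<bar>sin (2 * (pi / real p) * real (weight x))\<bar>))"
    by (rule sum.cong[OF refl]) (rule pt, simp)
  finally show ?thesis unfolding nN(2) by (simp add: sum_distrib_left)
qed

lemma roots_sum:
  assumes p: "p > 0"
  shows "(\<Sum>k<p. cis (2 * pi * real k * (real j - real r) / real p)) = (if j mod p = r mod p then of_nat p else 0)"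
proof -
  define t where "t = real j - real r"
  define z where "z = cis (2 * pi * t / real p)"
  have tz: "t = real_of_int (int j - int r)" by (simp add: t_def)
  have zk: "cis (2 * pi * real k * t / real p) = z ^ k" for k
    by (simp add: z_def DeMoivre algebra_simps)
  have zp: "z ^ p = 1"
  proof -
    have "z ^ p = cis (2 * pi * t)" using p by (simp add: z_def DeMoivre)
    also have "\<dots> = 1" unfolding tz by (rule cis_multiple_2pi) simp
    finally show ?thesis .
  qed
  have z1: "z = 1 \<longleftrightarrow> j mod p = r mod p"
  proof
    assume "z = 1"
    then have "cos (2 * pi * t / real p) = 1" by (simp add: z_def complex_eq_iff)
    then obtain q :: int where q: "2 * pi * t / real p = real_of_int q * 2 * pi"
      by (auto simp: cos_one_2pi_int)
    then have "t = real_of_int q * real p" using p by (simp add: field_simps)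
    then have "int j - int r = q * int p" unfolding tz by (metis of_int_eq_iff of_int_mult of_int_of_nat_eq)
    then have "int p dvd (int j - int r)" by simp
    then have "int j mod int p = int r mod int p" by (simp add: mod_eq_dvd_iff)
    then show "j mod p = r mod p" by (simp flip: of_nat_mod)
  next
    assume "j mod p = r mod p"
    then have "int j mod int p = int r mod int p" by (simp flip: of_nat_mod)
    then have "int p dvd (int j - int r)" by (simp add: mod_eq_dvd_iff)
    then obtain q where "int j = int r + int p * q" by (metis dvd_def diff_eq_eq add.commute)
    then have "t = real p * real_of_int q" unfolding tz by simp
    then have "2 * pi * t / real p = 2 * pi * real_of_int q" using p by simp
    then show "z = 1" unfolding z_def by (simp add: cis_multiple_2pi)
  qed
  have "(\<Sum>k<p. cis (2 * pi * real k * (real j - real r) / real p)) = (\<Sum>k<p. z ^ k)"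
    by (simp add: zk t_def[symmetric])
  also have "\<dots> = (if j mod p = r mod p then of_nat p else 0)"
    by (simp add: sum_gp_strict zp z1[symmetric])
  finally show ?thesis .
qed

lemma norm_1_cis: "cmod (1 + cis \<phi>) = 2 * \<bar>cos (\<phi> / 2)\<bar>"
proof -
  have c: "cos \<phi> = 2 * (cos (\<phi> / 2))\<^sup>2 - 1" using cos_double_cos[of "\<phi> / 2"] by simp
  have "(cmod (1 + cis \<phi>))\<^sup>2 = (1 + cos \<phi>)\<^sup>2 + (sin \<phi>)\<^sup>2"
    by (simp add: cmod_def)
  also have "\<dots> = 2 + 2 * cos \<phi>" by (simp add: power2_eq_square algebra_simps sin_squared_eq)
  also have "\<dots> = (2 * \<bar>cos (\<phi> / 2)\<bar>)\<^sup>2" unfolding c by (simp add: power2_eq_square)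
  finally show ?thesis by (rule power2_eq_imp_eq) auto
qed

lemma cos_k_bound:
  assumes k: "1 \<le> k" "k < p"
  shows "\<bar>cos (pi * real k / real p)\<bar> \<le> cos (pi / real p)"
proof -
  have p: "real p > 0" using k by simp
  have a: "pi / real p \<le> pi * real k / real p" using k p by (simp add: divide_right_mono)
  have b: "pi * real k / real p \<le> pi" using k p by (simp add: field_simps)
  have c: "pi / real p \<le> pi - pi * real k / real p"
  proof -
    have "real k + 1 \<le> real p" using k by linarith
    then have "pi * (real k + 1) \<le> pi * real p" by (simp add: mult_left_mono)
    then show ?thesis using p by (simp add: field_simps)
  qed
  have "cos (pi * real k / real p) \<le> cos (pi / real p)"
    by (rule cos_monotone_0_pi_le) (use a b p in auto)
  moreover have "cos (pi - pi * real k / real p) \<le> cos (pi / real p)"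
    by (rule cos_monotone_0_pi_le) (use c b p in auto)
  ultimately show ?thesis by (simp add: cos_pi_minus abs_if)
qed

lemma count_lb:
  assumes p: "p \<ge> 2" and r: "r < p"
  shows "real (card {x \<in> bitstrings N. weight x mod p = r}) \<ge> 2 ^ N * (1 / real p - cos (pi / real p) ^ N)"
proof -
  have p0: "p > 0" using p by simp
  define c where "c k = cis (- (2 * pi * real k * real r / real p)) * (1 + cis (2 * pi * real k / real p)) ^ N" for k
  have sumx: "(\<Sum>x\<in>bitstrings N. cis (2 * pi * real k * (real (weight x) - real r) / real p)) = c k" for k
  proof -
    have "cis (2 * pi * real k * (real (weight x) - real r) / real p) =
        cis (- (2 * pi * real k * real r / real p)) * cis (2 * pi * real k / real p) ^ weight x" for x
    proof -
      have "cis (- (2 * pi * real k * real r / real p)) * cis (2 * pi * real k / real p) ^ weight x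
          = cis (- (2 * pi * real k * real r / real p) + real (weight x) * (2 * pi * real k / real p))"
        by (simp add: DeMoivre cis_mult)
      also have "- (2 * pi * real k * real r / real p) + real (weight x) * (2 * pi * real k / real p)
          = 2 * pi * real k * (real (weight x) - real r) / real p"
        using p0 by (simp add: field_simps)
      finally show ?thesis by simp
    qed
    then show ?thesis unfolding c_def
      by (simp add: sum_distrib_left[symmetric] sum_bitstrings_pow_weight)
  qed
  have "real p * real (card {x \<in> bitstrings N. weight x mod p = r})
      = (\<Sum>x\<in>bitstrings N. if weight x mod p = r then real p else 0)"
    by (simp add: sum.If_cases Int_def)
  also have "\<dots> = (\<Sum>x\<in>bitstrings N. Re (\<Sum>k<p. cis (2 * pi * real k * (real (weight x) - real r) / real p)))"
    by (intro sum.cong refl) (simp add: roots_sum[OF p0] r)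
  also have "\<dots> = Re (\<Sum>k<p. c k)"
    by (simp only: Re_sum[symmetric]) (subst sum.swap, simp add: sumx)
  also have "(\<Sum>k<p. c k) = c 0 + (\<Sum>k\<in>{1..<p}. c k)"
  proof -
    have "{..<p} = insert 0 {1..<p}" using p0 by auto
    then show ?thesis by simp
  qed
  also have "c 0 = 2 ^ N" by (simp add: c_def)
  finally have eq: "real p * real (card {x \<in> bitstrings N. weight x mod p = r}) = 2 ^ N + Re (\<Sum>k\<in>{1..<p}. c k)"
    by simp
  have cb: "cmod (c k) \<le> (2 * cos (pi / real p)) ^ N" if "k \<in> {1..<p}" for k
  proof -
    have "cmod (c k) = (2 * \<bar>cos (pi * real k / real p)\<bar>) ^ N"
      by (simp add: c_def norm_mult norm_power norm_1_cis)
    also have "\<dots> \<le> (2 * cos (pi / real p)) ^ N"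
      using cos_k_bound[of k p] that by (intro power_mono) auto
    finally show ?thesis .
  qed
  have "- Re (\<Sum>k\<in>{1..<p}. c k) \<le> cmod (\<Sum>k\<in>{1..<p}. c k)"
    by (metis abs_Re_le_cmod abs_le_iff)
  also have "\<dots> \<le> (\<Sum>k\<in>{1..<p}. cmod (c k))" by (rule norm_sum)
  also have "\<dots> \<le> (\<Sum>k\<in>{1..<p}. (2 * cos (pi / real p)) ^ N)" by (rule sum_mono) (rule cb)
  also have "\<dots> = real (p - 1) * (2 ^ N * cos (pi / real p) ^ N)" by (simp add: power_mult_distrib)
  also have "\<dots> \<le> real p * (2 ^ N * cos (pi / real p) ^ N)"
  proof (rule mult_right_mono)
    have a1: "0 \<le> pi / real p" by simp
    have a2: "pi / real p \<le> pi / 2" using p by (intro divide_left_mono) auto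
    have "0 \<le> cos (pi / real p)" by (rule cos_ge_zero) (use a1 a2 in linarith)+
    then show "0 \<le> 2 ^ N * cos (pi / real p) ^ N" by simp
  qed simp
  finally have "real p * real (card {x \<in> bitstrings N. weight x mod p = r}) \<ge> 2 ^ N - real p * (2 ^ N * cos (pi / real p) ^ N)"
    using eq by linarith
  then have "real (card {x \<in> bitstrings N. weight x mod p = r}) \<ge> (2 ^ N - real p * (2 ^ N * cos (pi / real p) ^ N)) / real p"
    using p0 by (simp add: divide_le_eq mult.commute)
  also have "(2 ^ N - real p * (2 ^ N * cos (pi / real p) ^ N)) / real p = 2 ^ N * (1 / real p - cos (pi / real p) ^ N)"
    using p0 by (simp add: field_simps)
  finally show ?thesis .
qed

lemma tele_sin:
  "2 * sin (a / 2) * (\<Sum>r\<in>{1..h}. sin (real r * a)) = cos (a / 2) - cos ((real h + 1/2) * a)"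
proof (induction h)
  case 0 then show ?case by simp
next
  case (Suc h)
  have "2 * sin (a / 2) * sin (real (Suc h) * a) = cos ((real h + 1/2) * a) - cos ((real (Suc h) + 1/2) * a)"
  proof -
    have "2 * sin (a / 2) * sin (real (Suc h) * a) = cos (a / 2 - real (Suc h) * a) - cos (a / 2 + real (Suc h) * a)"
      by (subst mult.assoc, subst sin_times_sin) simp
    also have "cos (a / 2 - real (Suc h) * a) = cos ((real h + 1/2) * a)"
    proof -
      have "a / 2 - real (Suc h) * a = - ((real h + 1/2) * a)" by (simp add: algebra_simps)
      then show ?thesis by (simp only: cos_minus)
    qed
    finally show ?thesis by (simp add: algebra_simps)
  qed
  then show ?case using Suc by (simp add: distrib_left)
qed

lemma cos_ge_1_minus: "0 \<le> x \<Longrightarrow> x \<le> pi \<Longrightarrow> cos x \<ge> 1 - x\<^sup>2 / 2"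
proof -
  assume x: "0 \<le> x" "x \<le> pi"
  have s0: "0 \<le> sin (x / 2)" by (rule sin_ge_zero) (use x in auto)
  have s1: "sin (x / 2) \<le> x / 2" by (rule sin_x_le_x) (use x in auto)
  have "(sin (x / 2))\<^sup>2 \<le> (x / 2)\<^sup>2" using s1 s0 by (rule power_mono)
  moreover have "cos x = 1 - 2 * (sin (x / 2))\<^sup>2" using cos_double_sin[of "x / 2"] by simp
  ultimately show ?thesis by (simp add: power2_eq_square)
qed

lemma sum_abs_sin_lb:
  assumes p: "odd p" "p \<ge> 3"
  shows "(\<Sum>r<p. \<bar>sin (2 * pi * real r / real p)\<bar>) \<ge> 2 * real p / pi - 1"
proof -
  define h where "h = p div 2"
  have ph: "p = 2 * h + 1" using p by (simp add: h_def)
  have p0: "real p > 0" using p by simp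
  define f where "f r = \<bar>sin (2 * pi * real r / real p)\<bar>" for r
  have disj: "{1..h} \<inter> (\<lambda>r. p - r) ` {1..h} = {}" using ph by auto
  have sub: "{1..h} \<union> (\<lambda>r. p - r) ` {1..h} \<subseteq> {..<p}" using ph by auto
  have inj: "inj_on (\<lambda>r. p - r) {1..h}" using ph by (auto simp: inj_on_def)
  have refl: "f (p - r) = f r" if "r \<in> {1..h}" for r
  proof -
    have "2 * pi * real (p - r) / real p = 2 * pi - 2 * pi * real r / real p"
      using that ph p0 by (simp add: of_nat_diff field_simps)
    then show ?thesis by (simp add: f_def sin_2pi_minus)
  qed
  have pos: "f r = sin (r * (2 * pi / real p))" if "r \<in> {1..h}" for r
  proof -
    have "0 \<le> 2 * pi * real r / real p" by simp
    moreover have "2 * pi * real r / real p \<le> pi"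
    proof -
      have "2 * real r \<le> real p" using that ph by simp
      then show ?thesis using p0 by (simp add: field_simps)
    qed
    ultimately have "0 \<le> sin (2 * pi * real r / real p)" by (rule sin_ge_zero)
    then show ?thesis by (simp add: f_def mult_ac)
  qed
  have "(\<Sum>r<p. f r) \<ge> (\<Sum>r\<in>{1..h} \<union> (\<lambda>r. p - r) ` {1..h}. f r)"
    by (rule sum_mono2) (use sub in \<open>auto simp: f_def\<close>)
  also have "(\<Sum>r\<in>{1..h} \<union> (\<lambda>r. p - r) ` {1..h}. f r) = (\<Sum>r\<in>{1..h}. f r) + (\<Sum>r\<in>(\<lambda>r. p - r) ` {1..h}. f r)"
    by (rule sum.union_disjoint) (use disj in auto)
  also have "(\<Sum>r\<in>(\<lambda>r. p - r) ` {1..h}. f r) = (\<Sum>r\<in>{1..h}. f r)"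
    by (subst sum.reindex[OF inj]) (auto intro: sum.cong simp: refl)
  also have "(\<Sum>r\<in>{1..h}. f r) = (\<Sum>r\<in>{1..h}. sin (real r * (2 * pi / real p)))"
    by (rule sum.cong) (auto simp: pos)
  finally have S: "(\<Sum>r<p. f r) \<ge> 2 * (\<Sum>r\<in>{1..h}. sin (real r * (2 * pi / real p)))" by simp
  define x where "x = pi / real p"
  have x0: "0 < x" using p0 by (simp add: x_def)
  have xpi: "x \<le> pi / 2" using p unfolding x_def by (intro divide_left_mono) auto
  have sx0: "0 < sin x" by (rule sin_gt_zero) (use x0 xpi in auto)
  have sxx: "sin x \<le> x" using sin_x_le_x x0 by simp
  have T: "2 * sin x * (\<Sum>r\<in>{1..h}. sin (real r * (2 * pi / real p))) = cos x + 1"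
  proof -
    have "(real h + 1/2) * (2 * pi / real p) = pi" using ph p0 by (simp add: field_simps)
    then show ?thesis using tele_sin[of "2 * pi / real p" h] by (simp add: x_def)
  qed
  have E: "2 * (\<Sum>r\<in>{1..h}. sin (real r * (2 * pi / real p))) = (1 + cos x) / sin x"
    using T sx0 by (simp add: field_simps)
  have A: "(1 + cos x) / x \<le> (1 + cos x) / sin x"
  proof -
    have "0 \<le> 1 + cos x" using cos_ge_minus_one[of x] by linarith
    then show ?thesis using sx0 sxx by (intro divide_left_mono) auto
  qed
  have B: "(2 - x\<^sup>2 / 2) / x \<le> (1 + cos x) / x"
    using cos_ge_1_minus[of x] x0 xpi by (intro divide_right_mono) auto
  have C: "(2 - x\<^sup>2 / 2) / x = 2 * real p / pi - x / 2"
    using x0 p0 by (simp add: x_def field_simps power2_eq_square)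
  have "x / 2 \<le> 1" using xpi pi_less_4 by linarith
  then show ?thesis using S E A B C unfolding f_def by linarith
qed

lemma sum_by_residue:
  fixes A :: "'a set" and f :: "nat \<Rightarrow> real"
  assumes p: "p > 0" and that: "finite A"
  shows "(\<Sum>x\<in>A. f (h x mod p)) = (\<Sum>r<p. f r * real (card {x \<in> A. h x mod p = r}))"
proof -
  have "(\<Sum>x\<in>A. f (h x mod p)) = (\<Sum>x\<in>A. \<Sum>r<p. if h x mod p = r then f r else 0)"
    by (intro sum.cong refl) (simp add: sum.delta' p)
  also have "\<dots> = (\<Sum>r<p. \<Sum>x\<in>A. if h x mod p = r then f r else 0)" by (rule sum.swap)
  also have "\<dots> = (\<Sum>r<p. f r * real (card {x \<in> A. h x mod p = r}))"
    using that by (intro sum.cong refl) (simp add: sum.If_cases Int_def)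
  finally show ?thesis .
qed

lemma avg_sin_bound:
  assumes p: "odd p" "p \<ge> 3"
  shows "(1/2) ^ N * (\<Sum>x\<in>bitstrings N. \<bar>sin (2 * (pi / real p) * real (weight x))\<bar>)
     \<ge> 2 / pi - 1 / real p - real p * cos (pi / real p) ^ N"
proof -
  have p0: "p > 0" using p by simp
  define f where "f r = \<bar>sin (2 * pi * real r / real p)\<bar>" for r
  define c where "c = cos (pi / real p) ^ N"
  have c0: "0 \<le> c"
  proof -
    have a1: "0 \<le> pi / real p" by simp
    have a2: "pi / real p \<le> pi / 2" using p by (intro divide_left_mono) auto
    have "0 \<le> cos (pi / real p)" by (rule cos_ge_zero) (use a1 a2 in linarith)+
    then show ?thesis by (simp add: c_def)
  qed
  have f0: "0 \<le> f r" "f r \<le> 1" for r by (simp_all add: f_def)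
  have "(\<Sum>x\<in>bitstrings N. \<bar>sin (2 * (pi / real p) * real (weight x))\<bar>) = (\<Sum>x\<in>bitstrings N. f (weight x mod p))"
    by (intro sum.cong refl) (simp only: f_def sin_mod[OF p0])
  also have "\<dots> = (\<Sum>r<p. f r * real (card {x \<in> bitstrings N. weight x mod p = r}))"
    by (rule sum_by_residue[OF p0]) simp
  also have "\<dots> \<ge> (\<Sum>r<p. f r * (2 ^ N * (1 / real p - c)))"
    by (intro sum_mono mult_left_mono) (use count_lb[of p] p f0 in \<open>auto simp: c_def\<close>)
  also have "(\<Sum>r<p. f r * (2 ^ N * (1 / real p - c))) = (\<Sum>r<p. f r) * (2 ^ N * (1 / real p - c))"
    by (simp only: sum_distrib_right[symmetric])
  also have "\<dots> = 2 ^ N * ((\<Sum>r<p. f r) / real p - c * (\<Sum>r<p. f r))"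
    using p0 by (simp add: field_simps)
  finally have L: "(\<Sum>x\<in>bitstrings N. \<bar>sin (2 * (pi / real p) * real (weight x))\<bar>) \<ge> 2 ^ N * ((\<Sum>r<p. f r) / real p - c * (\<Sum>r<p. f r))" .
  have S1: "(\<Sum>r<p. f r) \<ge> 2 * real p / pi - 1" unfolding f_def by (rule sum_abs_sin_lb[OF p])
  have S2: "(\<Sum>r<p. f r) \<le> real p" using sum_mono[of "{..<p}" f "\<lambda>_. 1"] f0 by simp
  have "(\<Sum>r<p. f r) / real p \<ge> 2 / pi - 1 / real p"
  proof -
    have "(2 * real p / pi - 1) / real p \<le> (\<Sum>r<p. f r) / real p" using S1 p0 by (intro divide_right_mono) auto
    moreover have "(2 * real p / pi - 1) / real p = 2 / pi - 1 / real p" using p0 by (simp add: field_simps)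
    ultimately show ?thesis by simp
  qed
  moreover have "c * (\<Sum>r<p. f r) \<le> c * real p" using S2 c0 by (rule mult_left_mono)
  ultimately have "(\<Sum>r<p. f r) / real p - c * (\<Sum>r<p. f r) \<ge> 2 / pi - 1 / real p - real p * c"
    by (simp add: mult.commute)
  then have "(1/2) ^ N * (2 ^ N * ((\<Sum>r<p. f r) / real p - c * (\<Sum>r<p. f r))) \<ge> 2 / pi - 1 / real p - real p * c"
    by (simp add: power_one_over)
  moreover have "(1/2) ^ N * (\<Sum>x\<in>bitstrings N. \<bar>sin (2 * (pi / real p) * real (weight x))\<bar>)
     \<ge> (1/2) ^ N * (2 ^ N * ((\<Sum>r<p. f r) / real p - c * (\<Sum>r<p. f r)))"
    using L by (intro mult_left_mono) auto
  ultimately show ?thesis unfolding c_def by linarith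
qed

lemma main_bound:
  assumes m: "m > 0" and n: "n = m * D + 1" and p: "odd p" "p \<ge> 3"
    and g: "\<bar>sin (pi / real p)\<bar> ^ m \<le> 1/2"
  shows "tvd (bitstrings n) (P_psi m (pi / real p) n) (target_dist p n)
    \<le> 1/2 - 1/pi + 1 / (2 * real p) + real p * cos (pi / real p) ^ (n - 1) / 2
       + ((1 + 4 * \<bar>sin (pi / real p)\<bar> ^ m) ^ D - 1) * (2 + ((1 + 4 * \<bar>sin (pi / real p)\<bar> ^ m) ^ D - 1))"
proof -
  define \<eta> where "\<eta> = (1 + 4 * \<bar>sin (pi / real p)\<bar> ^ m) ^ D - 1"
  define P where "P = P_psi m (pi / real p) n"
  define P0 where "P0 z = (cmod (psi0 m (pi / real p) D z))\<^sup>2" for z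
  define Q where "Q = target_dist p n"
  have p0: "p > 0" using p by simp
  have "(\<Sum>z\<in>bitstrings n. \<bar>P z - Q z\<bar>) \<le> (\<Sum>z\<in>bitstrings n. \<bar>P z - P0 z\<bar> + \<bar>P0 z - Q z\<bar>)"
    by (rule sum_mono) linarith
  also have "\<dots> = (\<Sum>z\<in>bitstrings n. \<bar>P z - P0 z\<bar>) + (\<Sum>z\<in>bitstrings n. \<bar>P0 z - Q z\<bar>)"
    by (rule sum.distrib)
  also have "(\<Sum>z\<in>bitstrings n. \<bar>P z - P0 z\<bar>) \<le> (\<Sum>z\<in>bitstrings n. (1/2) ^ (n - 1) * (\<eta> * (2 + \<eta>)))"
    by (rule sum_mono) (use P_close[OF m n _ g] in \<open>simp add: P_def P0_def \<eta>_def\<close>)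
  also have "\<dots> = 2 * (\<eta> * (2 + \<eta>))"
  proof -
    have "real (2 ^ n) * (1/2) ^ (n - 1) = (2::real)" using n
      by (simp add: power_one_over)
    then show ?thesis by (simp add: bitstrings_card mult.assoc[symmetric])
  qed
  also have "(\<Sum>z\<in>bitstrings n. \<bar>P0 z - Q z\<bar>) = (1/2) ^ (n - 1) * (\<Sum>x\<in>bitstrings (n - 1). 1 - \<bar>sin (2 * (pi / real p) * real (weight x))\<bar>)"
    unfolding P0_def Q_def by (rule tvd0_eq[OF m n p0])
  also have "\<dots> = 1 - (1/2) ^ (n - 1) * (\<Sum>x\<in>bitstrings (n - 1). \<bar>sin (2 * (pi / real p) * real (weight x))\<bar>)"
    by (simp add: sum_subtractf bitstrings_card right_diff_distrib power_one_over)
  also have "\<dots> \<le> 1 - (2 / pi - 1 / real p - real p * cos (pi / real p) ^ (n - 1))"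
    using avg_sin_bound[OF p, of "n - 1"] by linarith
  finally have "(\<Sum>z\<in>bitstrings n. \<bar>P z - Q z\<bar>) \<le> 2 * (\<eta> * (2 + \<eta>)) + (1 - (2 / pi - 1 / real p - real p * cos (pi / real p) ^ (n - 1)))"
    by simp
  then have "(\<Sum>z\<in>bitstrings n. \<bar>P z - Q z\<bar>) / 2 \<le> (2 * (\<eta> * (2 + \<eta>)) + (1 - (2 / pi - 1 / real p - real p * cos (pi / real p) ^ (n - 1)))) / 2"
    by (rule divide_right_mono) simp
  also have "\<dots> = 1/2 - 1/pi + 1 / (2 * real p) + real p * cos (pi / real p) ^ (n - 1) / 2 + \<eta> * (2 + \<eta>)"
    by (simp add: field_simps)
  finally show ?thesis unfolding tvd_def P_def[symmetric] Q_def[symmetric] \<eta>_def[symmetric] .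
qed

lemma cos_upper:
  fixes x :: real
  assumes x: "0 \<le> x" "x \<le> 2"
  shows "cos x \<le> 1 - x\<^sup>2 / 8"
proof -
  define y where "y = x / 2"
  have y: "0 \<le> y" "y \<le> 1" using x by (simp_all add: y_def)
  have "\<bar>sin y - (\<Sum>m<3. sin_coeff m * y ^ m)\<bar> \<le> inverse (fact 3) * \<bar>y\<bar> ^ 3"
    by (rule Maclaurin_sin_bound)
  moreover have "(\<Sum>m<3. sin_coeff m * y ^ m) = y"
  proof -
    have "{..<3::nat} = {0,1,2}" by auto
    moreover have "sin_coeff 0 = 0" "sin_coeff 1 = 1" "sin_coeff 2 = 0" by (simp_all add: sin_coeff_def)
    ultimately show ?thesis by simp
  qed
  moreover have "inverse (fact 3) * \<bar>y\<bar> ^ 3 = y ^ 3 / 6"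
  proof -
    have f6: "fact 3 = (6::real)" by (simp add: numeral_3_eq_3)
    have "inverse (fact 3) * \<bar>y::real\<bar> ^ 3 = inverse 6 * y ^ 3" by (simp only: f6 abs_of_nonneg[OF y(1)])
    then show ?thesis by (simp add: field_simps)
  qed
  ultimately have s1: "sin y \<ge> y - y ^ 3 / 6" by linarith
  have "y ^ 3 = y * y\<^sup>2" by (simp only: power2_eq_square power3_eq_cube)
  moreover have "y * y\<^sup>2 \<le> y * 1" using y by (intro mult_left_mono) (auto simp: power_le_one)
  ultimately have "y ^ 3 \<le> y" by simp
  then have s2: "sin y \<ge> y / 2" using s1 y by linarith
  have "(y / 2)\<^sup>2 \<le> (sin y)\<^sup>2" using s2 y by (intro power_mono) auto
  moreover have "cos x = 1 - 2 * (sin y)\<^sup>2" using cos_double_sin[of y] by (simp add: y_def)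
  ultimately show ?thesis by (simp add: y_def power2_eq_square)
qed

lemma instance_bound:
  fixes c c1 c2 K :: real and m n D p :: nat
  assumes c0: "0 < c" and c1: "0 < c1" and c2: "0 < c2" and m: "m > 0"
    and cm: "1 + c \<le> c * real m"
    and n: "n = m * D + 1" and n2: "n \<ge> 2" and pr: "prime p"
    and lo: "c1 * real n powr c \<le> real p" and hi: "real p \<le> c2 * real n powr c"
    and A: "8 \<le> c1 * real n powr c"
    and K: "K = 4 * (pi / c1) ^ m"
    and B: "K * real n powr (-c) \<le> 1/2"
    and Cc: "c2\<^sup>2 * real n powr (2*c) * exp (-(real n - 1) / (2 * (c2\<^sup>2 * real n powr (2*c)))) \<le> 1"
  shows "tvd (bitstrings n) (P_psi m (pi / real p) n) (target_dist p n) \<le> 1/2 - 1/pi + (1 + 6*K*c2)/real p"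
proof -
  have p8: "real p \<ge> 8" using lo A by linarith
  have pp: "real p > 0" using p8 by linarith
  have p3: "p \<ge> 3" using p8 by linarith
  have podd: "odd p" using prime_odd_nat[OF pr] p3 by simp
  have n1: "real n \<ge> 1" using n2 by simp
  have nc0: "real n powr c > 0" using n1 by simp
  define x where "x = pi / real p"
  have x0: "0 < x" using pp by (simp add: x_def)
  have xh: "x \<le> 1/2"
  proof -
    have "x \<le> pi / 8" unfolding x_def using p8 by (intro divide_left_mono) auto
    then show ?thesis using pi_less_4 by linarith
  qed
  define s where "s = \<bar>sin x\<bar>"
  have s0: "0 \<le> s" by (simp add: s_def)
  have sx: "s \<le> x" using abs_sin_x_le_abs_x[of x] x0 by (simp add: s_def)
  have sm: "s ^ m \<le> s" using power_decreasing[of 1 m s] m s0 sx xh by simp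
  have "s ^ m \<le> 1/2" using sm sx xh by linarith
  then have g: "\<bar>sin (pi / real p)\<bar> ^ m \<le> 1/2" by (simp add: s_def x_def)
  note MB = main_bound[OF m n podd p3 g]
  define \<delta> where "\<delta> = 4 * s ^ m"
  define \<eta> where "\<eta> = (1 + \<delta>) ^ D - 1"
  define t where "t = K * real n powr (-c)"
  have d0: "0 \<le> \<delta>" using s0 by (simp add: \<delta>_def)
  have "s ^ m \<le> x ^ m" using sx s0 by (rule power_mono)
  also have "x ^ m \<le> (pi / (c1 * real n powr c)) ^ m"
    unfolding x_def using lo c1 nc0 x0 pp by (intro power_mono divide_left_mono) (auto simp: x_def)
  also have "\<dots> = (pi / c1) ^ m / (real n powr c) ^ m" by (simp add: power_divide power_mult_distrib)
  also have "(real n powr c) ^ m = real n powr (real m * c)" using n1 by (simp add: powr_power)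
  also have "(pi / c1) ^ m / real n powr (real m * c) \<le> (pi / c1) ^ m / (real n * real n powr c)"
  proof (rule divide_left_mono)
    have "real n powr (1 + c) \<le> real n powr (real m * c)" using n1 cm by (intro powr_mono) (auto simp: mult.commute)
    then show "real n * real n powr c \<le> real n powr (real m * c)" using n1 by (simp add: powr_add)
    show "0 < real n powr (real m * c) * (real n * real n powr c)" using n1 nc0 by simp
  qed (use c1 in simp)
  finally have "s ^ m \<le> (pi / c1) ^ m / (real n * real n powr c)" .
  then have "4 * s ^ m \<le> 4 * ((pi / c1) ^ m / (real n * real n powr c))" by simp
  then have dbound: "\<delta> \<le> K / (real n * real n powr c)" unfolding \<delta>_def K by simp
  have Dd: "real D * \<delta> \<le> t"
  proof -
    have "D \<le> m * D" using m by simp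
    then have "D \<le> n" using n by linarith
    then have "real D \<le> real n" by simp
    then have "real D * \<delta> \<le> real n * \<delta>" using d0 by (intro mult_right_mono)
    also have "\<dots> \<le> real n * (K / (real n * real n powr c))" using dbound n1 by (intro mult_left_mono) auto
    also have "\<dots> = t" unfolding t_def using n1 nc0 by (simp add: powr_minus_divide field_simps)
    finally show ?thesis .
  qed
  have t12: "t \<le> 1/2" using B by (simp add: t_def)
  have Dd0: "0 \<le> real D * \<delta>" using d0 by simp
  have eta: "\<eta> \<le> 2 * t"
  proof -
    have "(1 + \<delta>) ^ D \<le> exp \<delta> ^ D" using d0 by (intro power_mono) (auto simp: exp_ge_add_one_self)
    also have "\<dots> = exp (real D * \<delta>)" by (simp add: exp_of_nat_mult)
    also have "\<dots> \<le> 1 + 2 * (real D * \<delta>)" using Dd0 Dd t12 by (intro real_exp_bound_lemma) auto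
    finally show ?thesis unfolding \<eta>_def using Dd by linarith
  qed
  have eta0: "0 \<le> \<eta>" unfolding \<eta>_def using d0 by (simp add: one_le_power)
  have eta2: "\<eta> * (2 + \<eta>) \<le> 6 * t"
  proof -
    have "\<eta> * (2 + \<eta>) \<le> \<eta> * 3" using eta eta0 t12 by (intro mult_left_mono) auto
    then show ?thesis using eta by linarith
  qed
  have tK: "t \<le> K * c2 / real p"
  proof -
    have "real n powr (-c) = 1 / real n powr c" by (simp add: powr_minus_divide)
    also have "\<dots> \<le> c2 / real p" using hi nc0 pp c2 by (simp add: field_simps mult.commute)
    finally have "real n powr (-c) \<le> c2 / real p" .
    moreover have "0 \<le> K" unfolding K using c1 by simp
    ultimately have "K * real n powr (-c) \<le> K * (c2 / real p)" by (intro mult_left_mono)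
    then show ?thesis by (simp add: t_def)
  qed
  have p2: "(real p)\<^sup>2 \<le> c2\<^sup>2 * real n powr (2 * c)"
  proof -
    have "(real p)\<^sup>2 \<le> (c2 * real n powr c)\<^sup>2" using hi pp by (intro power_mono) auto
    also have "(real n powr c)\<^sup>2 = real n powr (2 * c)" using n1 by (simp add: powr_power)
    then have "(c2 * real n powr c)\<^sup>2 = c2\<^sup>2 * real n powr (2 * c)" by (simp only: power_mult_distrib)
    finally show ?thesis .
  qed
  have cx: "cos x \<le> 1 - 1 / (2 * (real p)\<^sup>2)"
  proof -
    have "cos x \<le> 1 - x\<^sup>2 / 8" using x0 xh by (intro cos_upper) auto
    moreover have "1 / (2 * (real p)\<^sup>2) \<le> x\<^sup>2 / 8"
    proof -
      have "4 \<le> pi\<^sup>2" using pi_ge_two mult_mono[OF pi_ge_two pi_ge_two] by (simp add: power2_eq_square)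
      then show ?thesis unfolding x_def using pp by (simp add: field_simps power2_eq_square)
    qed
    ultimately show ?thesis by linarith
  qed
  have cx0: "0 \<le> cos x" by (rule cos_ge_zero) (use x0 xh pi_ge_two in linarith)+
  have "cos x ^ (n - 1) \<le> (1 - 1 / (2 * (real p)\<^sup>2)) ^ (n - 1)" using cx cx0 by (intro power_mono)
  also have "\<dots> \<le> exp (- (1 / (2 * (real p)\<^sup>2))) ^ (n - 1)"
    using exp_ge_add_one_self[of "- (1 / (2 * (real p)\<^sup>2))"] cx cx0 by (intro power_mono) auto
  also have "\<dots> = exp (real (n - 1) * (- (1 / (2 * (real p)\<^sup>2))))" by (simp only: exp_of_nat_mult)
  also have "exp (real (n - 1) * (- (1 / (2 * (real p)\<^sup>2)))) = exp (- (real n - 1) / (2 * (real p)\<^sup>2))"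
    using n2 pp by (simp add: of_nat_diff field_simps)
  also have "\<dots> \<le> exp (- (real n - 1) / (2 * (c2\<^sup>2 * real n powr (2 * c))))"
  proof -
    have pc: "(real p)\<^sup>2 \<le> c2\<^sup>2 * real n powr (2 * c)" by (rule p2)
    have "(real n - 1) / (2 * (c2\<^sup>2 * real n powr (2 * c))) \<le> (real n - 1) / (2 * (real p)\<^sup>2)"
      using pc pp n1 c2 nc0 by (intro divide_left_mono) (auto intro!: mult_pos_pos)
    then show ?thesis by (simp only: exp_le_cancel_iff minus_divide_left[symmetric] neg_le_iff_le)
  qed
  finally have cpow: "cos x ^ (n - 1) \<le> exp (- (real n - 1) / (2 * (c2\<^sup>2 * real n powr (2 * c))))" .
  have "(real p)\<^sup>2 * cos x ^ (n - 1) \<le> c2\<^sup>2 * real n powr (2 * c) * exp (- (real n - 1) / (2 * (c2\<^sup>2 * real n powr (2 * c))))"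
    using p2 cpow cx0 by (intro mult_mono) auto
  also have "\<dots> \<le> 1" using Cc by simp
  finally have "(real p)\<^sup>2 * cos x ^ (n - 1) \<le> 1" .
  then have cb: "real p * cos x ^ (n - 1) / 2 \<le> 1 / (2 * real p)"
    using pp by (simp add: field_simps power2_eq_square)
  have "tvd (bitstrings n) (P_psi m (pi / real p) n) (target_dist p n)
      \<le> 1/2 - 1/pi + 1 / (2 * real p) + real p * cos x ^ (n - 1) / 2 + \<eta> * (2 + \<eta>)"
    using MB unfolding \<eta>_def \<delta>_def s_def x_def .
  also have "\<dots> \<le> 1/2 - 1/pi + 1 / (2 * real p) + 1 / (2 * real p) + 6 * (K * c2 / real p)"
    using cb eta2 tK by linarith
  also have "\<dots> = 1/2 - 1/pi + (1 + 6*K*c2)/real p" using pp by (simp add: field_simps)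
  finally show ?thesis .
qed

lemma asym1: "0 < c \<Longrightarrow> 0 < c1 \<Longrightarrow> filterlim (\<lambda>n::nat. c1 * real n powr c) at_top sequentially"
  by real_asymp
lemma asym2: "0 < c \<Longrightarrow> 0 < K \<Longrightarrow> (\<lambda>n::nat. K * real n powr (-c)) \<longlonglongrightarrow> 0"
  by real_asymp
lemma asym3: "0 < c \<Longrightarrow> c < 1/2 \<Longrightarrow> 0 < c2 \<Longrightarrow>
  (\<lambda>n::nat. c2\<^sup>2 * real n powr (2*c) * exp (-(real n - 1) / (2 * (c2\<^sup>2 * real n powr (2*c))))) \<longlonglongrightarrow> 0"
  by real_asymp

theorem theorem4p11:
  fixes c c1 c2 :: real
  assumes "0 < c" "c < 1/2" "0 < c1" "c1 \<le> c2"
  shows "\<exists>C>0. \<exists>n0::nat. \<forall>(n::nat) (p::nat).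
           (let m = nat \<lceil>1 / c + 1\<rceil> in
             n \<ge> n0 \<longrightarrow> m dvd (n - 1) \<longrightarrow> prime p \<longrightarrow>
             c1 * real n powr c \<le> real p \<longrightarrow> real p \<le> c2 * real n powr c \<longrightarrow>
             tvd (bitstrings n) (P_psi m (pi / real p) n) (target_dist p n)
               \<le> 1/2 - 1/pi + C / real p)"
proof -
  note c0 = assms(1) and chalf = assms(2) and c1 = assms(3)
  have c2: "0 < c2" using assms(3,4) by linarith
  define m where "m = nat \<lceil>1 / c + 1\<rceil>"
  have mr: "real m \<ge> 1 / c + 1"
  proof -
    have a: "1 / c + 1 \<le> real_of_int \<lceil>1 / c + 1\<rceil>" by (rule le_of_int_ceiling)
    have "0 < 1 / c + 1" using c0 by (simp add: add_pos_pos)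
    then have "(0::real) \<le> real_of_int \<lceil>1 / c + 1\<rceil>" using a by linarith
    then have "0 \<le> \<lceil>1 / c + 1\<rceil>" by (simp only: of_int_0_le_iff)
    then have "real m = real_of_int \<lceil>1 / c + 1\<rceil>" by (simp add: m_def)
    then show ?thesis using a by simp
  qed
  have m0: "m > 0"
  proof -
    have "1 / c + 1 > 0" using c0 by (simp add: add_pos_pos)
    then show ?thesis using mr by linarith
  qed
  have cm: "1 + c \<le> c * real m"
  proof -
    have "c * (1 / c + 1) \<le> c * real m" using mr c0 by (intro mult_left_mono) auto
    moreover have "c * (1 / c + 1) = 1 + c" using c0 by (simp add: distrib_left)
    ultimately show ?thesis by simp
  qed
  define K where "K = 4 * (pi / c1) ^ m"
  have K0: "K > 0" using c1 by (simp add: K_def)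
  define C where "C = 1 + 6 * K * c2"
  have C0: "C > 0" using K0 c2 by (simp add: C_def add_pos_nonneg)
  have ev: "eventually (\<lambda>n. 2 \<le> n \<and> 8 \<le> c1 * real n powr c \<and> K * real n powr (-c) \<le> 1/2 \<and>
      c2\<^sup>2 * real n powr (2*c) * exp (-(real n - 1) / (2 * (c2\<^sup>2 * real n powr (2*c)))) \<le> 1) sequentially"
  proof (intro eventually_conj)
    show "eventually (\<lambda>n. 2 \<le> n) sequentially" by (rule eventually_ge_at_top)
    show "eventually (\<lambda>n. 8 \<le> c1 * real n powr c) sequentially"
      using asym1[OF c0 c1] by (simp add: filterlim_at_top)
    show "eventually (\<lambda>n. K * real n powr (-c) \<le> 1/2) sequentially"
      using order_tendstoD(2)[OF asym2[OF c0 K0], of "1/2"] by (auto elim: eventually_mono)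
    show "eventually (\<lambda>n. c2\<^sup>2 * real n powr (2*c) * exp (-(real n - 1) / (2 * (c2\<^sup>2 * real n powr (2*c)))) \<le> 1) sequentially"
      using order_tendstoD(2)[OF asym3[OF c0 chalf c2], of 1] by (auto elim: eventually_mono)
  qed
  then obtain n0 where n0: "\<And>n. n \<ge> n0 \<Longrightarrow> 2 \<le> n \<and> 8 \<le> c1 * real n powr c \<and> K * real n powr (-c) \<le> 1/2 \<and>
      c2\<^sup>2 * real n powr (2*c) * exp (-(real n - 1) / (2 * (c2\<^sup>2 * real n powr (2*c)))) \<le> 1"
    by (auto simp: eventually_sequentially)
  show ?thesis
  proof (intro exI[of _ C] conjI C0 exI[of _ n0] allI, unfold Let_def m_def[symmetric], intro impI)
    fix n p :: nat
    assume nn0: "n0 \<le> n" and dv: "m dvd (n - 1)" and pr: "prime p"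
      and lo: "c1 * real n powr c \<le> real p" and hi: "real p \<le> c2 * real n powr c"
    note N = n0[OF nn0]
    define D where "D = (n - 1) div m"
    have n: "n = m * D + 1" using dv N unfolding D_def by (metis dvd_mult_div_cancel le_add_diff_inverse2 one_le_numeral order_trans)
    show "tvd (bitstrings n) (P_psi m (pi / real p) n) (target_dist p n) \<le> 1/2 - 1/pi + C / real p"
      unfolding C_def
      by (rule instance_bound[OF c0 c1 c2 m0 cm n _ pr lo hi _ K_def]) (use N in auto)
  qed
qed
end
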